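(* In the setting described in the context, assume condition (j), condition (jj), (NL1), and the following observability hypothesis: there is a sequence $(\overline T_n)_n$ with $T_{2n}>\overline T_n$ for all $n$, such that for every $n$ and every $T\in(\overline T_n,T_{2n}]$ there is a constant $d_n>0$ (depending on $T$, independent of the data) with $$E_S(t_{2n}+T)\le d_n\int_{t_{2n}}^{t_{2n}+T}\|B_1^*(t)w_t(t)\|_{U_1}^2\,dt$$ for every weak solution $w$ of $w_{tt}+Aw+B_1(t)B_1^*(t)w_t=f(w)$ on $(t_{2n},t_{2n+1})$, $w(t_{2n})=w_0^n\in V$, $w_t(t_{2n})=w_1^n\in H$. Let $\hat d_n=\frac{d_n}{d_n+1}$ with $d_n$ corresponding to $T=T_{2n}$, and let $C_3$ be the embedding constant in $\|u\|_{W_3}^2\le C_3\|u\|_H^2$. If $$\sum_{n=0}^\infty\big[2C_3M_{2n+1}T_{2n+1}+\ln\hat d_n\big]=-\infty,$$ then every solution $u$ of $$u_{tt}(t)+Au(t)+B_1(t)B_1^*(t)u_t(t)-B_3(t)B_3^*(t)u_t(t)=f(u),\ t>0,\qquad u(0)=u_0\in V,\ u_t(0)=u_1\in H,$$ satisfies $E_S(t)\to0$ as $t\to+\infty$.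
   Context: $E_S(t)=\frac12(\|u(t)\|_V^2+\|u_t(t)\|_H^2)-\mathcal F(u(t))$. $H$ is a real Hilbert space, $A:\mathcal D(A)\to H$ a densely defined, self-adjoint, positive, coercive linear operator, $V=\mathcal D(A^{1/2})$ with $\|v\|_V=\|A^{1/2}v\|_H$, $V\hookrightarrow H\equiv H'\hookrightarrow V'$ densely. $U_1,U_3$ are real Hilbert spaces, $B_i(t)\in\mathcal L(U_i,H)$, $i=1,3$, with $B_1^*(t)B_3^*(t)=0$ for $t>0$. There is a sequence $0=t_0<t_1<\cdots$; $I_n=[t_n,t_{n+1})$, $T_n=t_{n+1}-t_n$; $B_3=0$ on $I_{2n}$, $B_1=0$ on $I_{2n+1}$, $B_1\in C^1([t_{2n},t_{2n+1}];\mathcal L(U_1,H))$, $B_3\in C([t_{2n+1},t_{2n+2}];\mathcal L(U_3,H))$. $W_1,W_3$ are Hilbert spaces with $\|u\|_{W_i}^2\le C_i\|u\|_H^2$ for $u\in H$, $i=1,3$. $f:V\to H$ is locally Lipschitz, $\mathcal F:V\to\mathbb R$ with $\mathcal F(0)=0$, $\mathcal F'(u)v=\langle f(u),v\rangle_{V',V}$. (NL1): $sf(s)\le0$ for all $s\in\mathbb R$ (scalar form, $f$ acting pointwise as in the model $f(u)=-|u|^pu$). (j): for every $n$ there are $0<m_{2n}\le M_{2n}$ with $m_{2n}\|u\|_{W_1}^2\le\|B_1^*(t)u\|_{U_1}^2\le M_{2n}\|u\|_{W_1}^2$ for $u\in H$, $t\in I_{2n}$. (jj): there is $M_{2n+1}>0$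 with $\|B_3^*(t)u\|_{U_3}^2\le M_{2n+1}\|u\|_{W_3}^2$ for $u\in H$, $t\in I_{2n+1}$. *)

theory Defs
  imports "HOL-Analysis.Analysis"
begin

text \<open>Gelfand-triple setting: V is a real Hilbert space continuously, injectively and densely
embedded in H via the bounded linear map iota.  The operator A is the one associated with the
V inner product: for v in D(A), <A v, w>_H = <v, w>_V for all w in V; so ||v||_V = ||A^(1/2) v||_H.\<close>

definition Bstar_of :: "('u::real_inner \<Rightarrow>\<^sub>L 'h::real_inner) \<Rightarrow> ('h \<Rightarrow>\<^sub>L 'u) \<Rightarrow> bool" where
  "Bstar_of B Bs \<longleftrightarrow> (\<forall>x y. inner (blinfun_apply B x) y = inner x (blinfun_apply Bs y))"

definition energy :: "('v::real_normed_vector \<Rightarrow> real) \<Rightarrow> (real \<Rightarrow> 'v) \<Rightarrow> (real \<Rightarrow> 'h::real_normed_vector) \<Rightarrow> real \<Rightarrow> real" where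
  "energy F u u' t = (1/2) * ((norm (u t))\<^sup>2 + (norm (u' t))\<^sup>2) - F (u t)"

definition weak_sol ::
  "('v::real_inner \<Rightarrow>\<^sub>L 'h::real_inner) \<Rightarrow> ('v \<Rightarrow> 'h) \<Rightarrow> (real \<Rightarrow> 'h \<Rightarrow> 'h)
   \<Rightarrow> real \<Rightarrow> real \<Rightarrow> (real \<Rightarrow> 'v) \<Rightarrow> (real \<Rightarrow> 'h) \<Rightarrow> bool" where
  "weak_sol \<iota> f D a b w w' \<longleftrightarrow>
     a \<le> b \<and> continuous_on {a..b} w \<and> continuous_on {a..b} w' \<and>
     (\<forall>\<tau>\<in>{a..b}. ((\<lambda>s. blinfun_apply \<iota> (w s)) has_vector_derivative w' \<tau>) (at \<tau> within {a..b})) \<and>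
     (\<forall>v s t. a \<le> s \<longrightarrow> s \<le> t \<longrightarrow> t \<le> b \<longrightarrow>
        ((\<lambda>\<tau>. - inner (w \<tau>) v - inner (D \<tau> (w' \<tau>)) (blinfun_apply \<iota> v)
               + inner (f (w \<tau>)) (blinfun_apply \<iota> v))
          has_integral (inner (w' t) (blinfun_apply \<iota> v) - inner (w' s) (blinfun_apply \<iota> v))) {s..t})"

end

theory Submission
  imports Defs
begin

hide_const (open) Polynomial.content



definition JJ :: "'a::real_inner \<Rightarrow> ('a \<Rightarrow>\<^sub>L real)" where "JJ = blinfun_inner_right"

lemma JJ_apply[simp]: "blinfun_apply (JJ x) y = inner x y"
  by (simp add: JJ_def)

lemma JJ_bl: "bounded_linear JJ"
  by (simp add: JJ_def bounded_linear_blinfun_inner_right)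

lemma JJ_cont: "continuous_on S g \<Longrightarrow> continuous_on S (\<lambda>x. JJ (g x))"
proof -
  assume a: "continuous_on S g"
  have "continuous_on (g ` S) JJ" by (rule linear_continuous_on[OF JJ_bl])
  then show ?thesis using continuous_on_compose[OF a] by (simp add: o_def)
qed

lemma JJ_lin: "linear JJ" using JJ_bl bounded_linear.linear by blast

lemma JJ_norm[simp]: "norm (JJ x) = norm x"
proof (rule antisym)
  show "norm (JJ x) \<le> norm x"
    by (rule norm_blinfun_bound) (auto simp: Cauchy_Schwarz_ineq2)
  have "norm x * norm x = inner x x" by (simp add: power2_eq_square[symmetric] power2_norm_eq_inner)
  also have "\<dots> = blinfun_apply (JJ x) x" by simp
  also have "\<dots> \<le> norm (JJ x) * norm x" using norm_blinfun[of "JJ x" x] by simp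
  finally have *: "norm x * norm x \<le> norm (JJ x) * norm x" .
  show "norm x \<le> norm (JJ x)"
  proof (cases "x = 0")
    case False
    then show ?thesis using mult_right_le_imp_le[OF *] by simp
  qed simp
qed

lemma JJ_inj: "JJ x = JJ y \<Longrightarrow> x = y"
proof -
  assume "JJ x = JJ y"
  hence "JJ (x - y) = 0" by (simp add: linear_diff[OF JJ_lin])
  hence "norm (x - y) = 0" using JJ_norm[of "x - y"] by simp
  thus "x = y" by simp
qed

lemma JJ_sum: "JJ (\<Sum>(x, k)\<in>D. c k *\<^sub>R f x) = (\<Sum>(x, k)\<in>D. c k *\<^sub>R JJ (f x))"
  unfolding case_prod_unfold by (simp add: linear_sum[OF JJ_lin] linear_scale[OF JJ_lin] o_def)

lemma pull_has_integral:
  fixes f :: "real \<Rightarrow> 'a::real_inner"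
  assumes A: "((\<lambda>x. JJ (f x)) has_integral JJ y) {a..b}"
  shows "(f has_integral y) {a..b}"
  unfolding has_integral_real
proof (intro allI impI)
  fix e :: real assume e: "e > 0"
  obtain \<gamma> where g: "gauge \<gamma>" "\<And>\<D>. \<D> tagged_division_of {a..b} \<and> \<gamma> fine \<D> \<Longrightarrow>
        norm ((\<Sum>(x, k)\<in>\<D>. content k *\<^sub>R JJ (f x)) - JJ y) < e"
    using A e unfolding has_integral_real by meson
  have "gauge \<gamma> \<and> (\<forall>\<D>. \<D> tagged_division_of {a..b} \<and> \<gamma> fine \<D> \<longrightarrow>
        norm ((\<Sum>(x, k)\<in>\<D>. content k *\<^sub>R f x) - y) < e)"
  proof (intro conjI allI impI)
    fix \<D> assume D: "\<D> tagged_division_of {a..b} \<and> \<gamma> fine \<D>"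
    have "norm ((\<Sum>(x, k)\<in>\<D>. content k *\<^sub>R f x) - y) = norm (JJ ((\<Sum>(x, k)\<in>\<D>. content k *\<^sub>R f x) - y))"
      by (simp only: JJ_norm)
    also have "\<dots> = norm ((\<Sum>(x, k)\<in>\<D>. content k *\<^sub>R JJ (f x)) - JJ y)"
      by (simp only: linear_diff[OF JJ_lin] JJ_sum)
    also have "\<dots> < e" by (rule g(2)[OF D])
    finally show "norm ((\<Sum>(x, k)\<in>\<D>. content k *\<^sub>R f x) - y) < e" .
  qed (rule g(1))
  then show "\<exists>\<gamma>. gauge \<gamma> \<and> (\<forall>\<D>. \<D> tagged_division_of {a..b} \<and> \<gamma> fine \<D> \<longrightarrow>
        norm ((\<Sum>(x, k)\<in>\<D>. content k *\<^sub>R f x) - y) < e)" by blast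
qed

lemma JJ_has_integral:
  fixes f :: "real \<Rightarrow> 'a::real_inner"
  shows "(f has_integral y) S \<Longrightarrow> ((\<lambda>x. JJ (f x)) has_integral JJ y) S"
  using has_integral_linear[OF _ JJ_bl] by (simp add: o_def)

lemma pull_integrable:
  fixes f :: "real \<Rightarrow> 'a::{real_inner,complete_space}"
  assumes "(\<lambda>x. JJ (f x)) integrable_on {a..b}"
  shows "f integrable_on {a..b}"
proof -
  obtain \<Phi> where P: "((\<lambda>x. JJ (f x)) has_integral \<Phi>) {a..b}" using assms by blast
  have "complete (range (JJ :: 'a \<Rightarrow> _))"
    using complete_isometric_image[of 1 UNIV JJ] JJ_bl complete_UNIV subspace_UNIV by simp
  hence cl: "closed (range (JJ :: 'a \<Rightarrow> _))" by (rule complete_imp_closed)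
  have "\<Phi> \<in> closure (range JJ)"
    unfolding closure_approachable
  proof (intro allI impI)
    fix e :: real assume e: "e > 0"
    then obtain \<gamma> where g: "gauge \<gamma>" "\<And>\<D>. \<D> tagged_division_of {a..b} \<Longrightarrow> \<gamma> fine \<D> \<Longrightarrow>
        norm ((\<Sum>(x, k)\<in>\<D>. content k *\<^sub>R JJ (f x)) - \<Phi>) < e"
      using P e unfolding has_integral_real by meson
    obtain \<D> where D: "\<D> tagged_division_of {a..b}" "\<gamma> fine \<D>"
      using fine_division_exists_real[OF g(1)] by blast
    have "dist (JJ (\<Sum>(x, k)\<in>\<D>. content k *\<^sub>R f x)) \<Phi> < e"
      using g(2)[OF D] by (simp only: JJ_sum dist_norm)
    then show "\<exists>y\<in>range JJ. dist y \<Phi> < e" by blast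
  qed
  hence "\<Phi> \<in> range JJ" using cl by (simp add: closure_closed)
  then obtain y where "\<Phi> = JJ y" by (rule rangeE)
  hence "((\<lambda>x. JJ (f x)) has_integral JJ y) {a..b}" using P by simp
  hence "(f has_integral y) {a..b}" by (rule pull_has_integral)
  thus ?thesis by blast
qed

lemma int_cont:
  fixes g :: "real \<Rightarrow> 'a::{real_inner,complete_space}"
  assumes "continuous_on {a..b} g"
  shows "g integrable_on {a..b}"
proof (rule pull_integrable, rule integrable_continuous_real)
  show "continuous_on {a..b} (\<lambda>x. JJ (g x))"
    by (rule JJ_cont[OF assms])
qed

lemma JJ_deriv:
  assumes "(f has_vector_derivative f') (at x within S)"
  shows "((\<lambda>x. JJ (f x)) has_vector_derivative JJ f') (at x within S)"
  using bounded_linear.has_vector_derivative[OF JJ_bl assms] .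

lemma ftc:
  fixes f :: "real \<Rightarrow> 'a::{real_inner,complete_space}"
  assumes "a \<le> b" "\<And>x. x \<in> {a..b} \<Longrightarrow> (f has_vector_derivative f' x) (at x within {a..b})"
  shows "(f' has_integral (f b - f a)) {a..b}"
proof (rule pull_has_integral)
  have "((\<lambda>x. JJ (f' x)) has_integral (JJ (f b) - JJ (f a))) {a..b}"
    by (rule fundamental_theorem_of_calculus[OF assms(1)]) (rule JJ_deriv[OF assms(2)])
  thus "((\<lambda>x. JJ (f' x)) has_integral JJ (f b - f a)) {a..b}"
    by (simp add: linear_diff[OF JJ_lin])
qed

lemma JJ_integral:
  fixes f :: "real \<Rightarrow> 'a::real_inner"
  shows "f integrable_on S \<Longrightarrow> integral S (\<lambda>x. JJ (f x)) = JJ (integral S f)"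
  using JJ_has_integral integral_unique by blast

lemma integral_combine':
  fixes g :: "real \<Rightarrow> 'a::{real_inner,complete_space}"
  assumes "a \<le> c" "c \<le> b" "continuous_on {a..b} g"
  shows "integral {a..c} g + integral {c..b} g = integral {a..b} g"
proof -
  have c1: "continuous_on {a..c} g" "continuous_on {c..b} g"
    using assms by (auto intro: continuous_on_subset)
  have i1: "(\<lambda>x. JJ (g x)) integrable_on {a..b}" by (rule integrable_continuous_real[OF JJ_cont[OF assms(3)]])
  have "integral {a..c} (\<lambda>x. JJ (g x)) + integral {c..b} (\<lambda>x. JJ (g x)) = integral {a..b} (\<lambda>x. JJ (g x))"
    by (rule Henstock_Kurzweil_Integration.integral_combine[OF assms(1,2) i1])
  then have "JJ (integral {a..c} g) + JJ (integral {c..b} g) = JJ (integral {a..b} g)"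
    by (simp only: JJ_integral[OF int_cont[OF c1(1)]] JJ_integral[OF int_cont[OF c1(2)]] JJ_integral[OF int_cont[OF assms(3)]])
  then have "JJ (integral {a..c} g + integral {c..b} g) = JJ (integral {a..b} g)"
    by (simp only: linear_add[OF JJ_lin])
  thus ?thesis by (rule JJ_inj)
qed

lemma pull_deriv:
  fixes f :: "real \<Rightarrow> 'a::real_inner"
  assumes "((\<lambda>x. JJ (f x)) has_vector_derivative JJ v) (at x within S)"
  shows "(f has_vector_derivative v) (at x within S)"
proof -
  have e: "\<And>y. (1 / norm (y - x)) *\<^sub>R (JJ (f y) - (JJ (f x) + (y - x) *\<^sub>R JJ v)) =
      JJ ((1 / norm (y - x)) *\<^sub>R (f y - (f x + (y - x) *\<^sub>R v)))"
    by (simp add: linear_diff[OF JJ_lin] linear_add[OF JJ_lin] linear_scale[OF JJ_lin])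
  have "((\<lambda>y. JJ ((1 / norm (y - x)) *\<^sub>R (f y - (f x + (y - x) *\<^sub>R v)))) \<longlongrightarrow> 0) (at x within S)"
    using assms unfolding has_vector_derivative_def has_derivative_within e by simp
  hence "((\<lambda>y. norm ((1 / norm (y - x)) *\<^sub>R (f y - (f x + (y - x) *\<^sub>R v)))) \<longlongrightarrow> 0) (at x within S)"
    using tendsto_norm_zero_iff[of "\<lambda>y. JJ ((1 / norm (y - x)) *\<^sub>R (f y - (f x + (y - x) *\<^sub>R v)))"] by simp
  hence "((\<lambda>y. (1 / norm (y - x)) *\<^sub>R (f y - (f x + (y - x) *\<^sub>R v))) \<longlongrightarrow> 0) (at x within S)"
    using tendsto_norm_zero_iff by blast
  thus ?thesis unfolding has_vector_derivative_def has_derivative_within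
    by (simp add: bounded_linear_scaleR_left)
qed

lemma integral_deriv':
  fixes g :: "real \<Rightarrow> 'a::{real_inner,complete_space}"
  assumes "continuous_on {a..b} g" "x \<in> {a..b}"
  shows "((\<lambda>u. integral {a..u} g) has_vector_derivative g x) (at x within {a..b})"
proof (rule pull_deriv)
  have cJ: "continuous_on {a..b} (\<lambda>x. JJ (g x))"
    by (rule JJ_cont[OF assms(1)])
  have "((\<lambda>u. integral {a..u} (\<lambda>x. JJ (g x))) has_vector_derivative JJ (g x)) (at x within {a..b})"
    by (rule integral_has_vector_derivative[OF cJ assms(2)])
  moreover have "\<And>u. u \<in> {a..b} \<Longrightarrow> integral {a..u} (\<lambda>x. JJ (g x)) = JJ (integral {a..u} g)"
    using JJ_integral int_cont continuous_on_subset[OF assms(1)] by (metis atLeastAtMost_iff atLeastatMost_subset_iff order_refl)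
  ultimately show "((\<lambda>u. JJ (integral {a..u} g)) has_vector_derivative JJ (g x)) (at x within {a..b})"
    by (rule has_vector_derivative_transform_within[OF _ zero_less_one assms(2)]) auto
qed




lemma cont_left_le:
  fixes \<phi> \<psi> :: "real \<Rightarrow> real"
  assumes "x < b" "continuous_on {x..b} \<phi>" "continuous_on {x..b} \<psi>"
    "\<And>c. x \<le> c \<Longrightarrow> c < b \<Longrightarrow> \<phi> c \<le> \<psi> c"
  shows "\<phi> b \<le> \<psi> b"
proof (rule tendsto_le[OF trivial_limit_at_left_real])
  show "(\<psi> \<longlongrightarrow> \<psi> b) (at_left b)" using continuous_on_Icc_at_leftD assms by blast
  show "(\<phi> \<longlongrightarrow> \<phi> b) (at_left b)" using continuous_on_Icc_at_leftD assms by blast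
  show "\<forall>\<^sub>F c in at_left b. \<phi> c \<le> \<psi> c"
    using eventually_at_left_real[OF assms(1)] by eventually_elim (auto intro: assms(4))
qed

lemma steklov_unif:
  fixes g :: "real \<Rightarrow> 'a::{real_inner,complete_space}"
  assumes "continuous_on {a..b} g" "0 < \<epsilon>"
  shows "\<exists>\<delta>>0. \<forall>h \<tau>. 0 < h \<longrightarrow> h < \<delta> \<longrightarrow> a \<le> \<tau> \<longrightarrow> \<tau> + h \<le> b \<longrightarrow>
            norm ((1/h) *\<^sub>R integral {\<tau>..\<tau>+h} g - g \<tau>) \<le> \<epsilon>"
proof -
  have "uniformly_continuous_on {a..b} g"
    using assms(1) compact_uniformly_continuous compact_Icc by blast
  then obtain \<delta> where d: "\<delta> > 0" "\<And>x y. x \<in> {a..b} \<Longrightarrow> y \<in> {a..b} \<Longrightarrow> dist y x < \<delta> \<Longrightarrow> dist (g y) (g x) < \<epsilon>"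
    unfolding uniformly_continuous_on_def using assms(2) by metis
  show ?thesis
  proof (intro exI[of _ \<delta>] conjI allI impI)
    show "0 < \<delta>" by (rule d(1))
  next
    fix h \<tau> assume h: "0 < h" "h < \<delta>" "a \<le> \<tau>" "\<tau> + h \<le> b"
    have sub: "{\<tau>..\<tau>+h} \<subseteq> {a..b}" using h by auto
    have cg: "continuous_on {\<tau>..\<tau>+h} g" using continuous_on_subset[OF assms(1) sub] .
    have int: "((\<lambda>s. g s - g \<tau>) has_integral (integral {\<tau>..\<tau>+h} g - h *\<^sub>R g \<tau>)) {\<tau>..\<tau>+h}"
    proof -
      have "(g has_integral integral {\<tau>..\<tau>+h} g) {\<tau>..\<tau>+h}"
        using int_cont[OF cg] by (simp add: integrable_integral)
      moreover have "((\<lambda>s. g \<tau>) has_integral h *\<^sub>R g \<tau>) {\<tau>..\<tau>+h}"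
        using has_integral_const_real[of "g \<tau>" \<tau> "\<tau>+h"] h by simp
      ultimately show ?thesis by (rule has_integral_diff)
    qed
    have "norm (integral {\<tau>..\<tau>+h} g - h *\<^sub>R g \<tau>) \<le> \<epsilon> * content (cbox \<tau> (\<tau>+h))"
    proof (rule has_integral_bound)
      show "0 \<le> \<epsilon>" using assms by simp
      show "((\<lambda>s. g s - g \<tau>) has_integral (integral {\<tau>..\<tau>+h} g - h *\<^sub>R g \<tau>)) (cbox \<tau> (\<tau>+h))"
        using int by simp
      fix x assume "x \<in> cbox \<tau> (\<tau>+h)"
      hence "x \<in> {a..b}" "\<tau> \<in> {a..b}" "dist x \<tau> < \<delta>" using h by (auto simp: dist_real_def)
      thus "norm (g x - g \<tau>) \<le> \<epsilon>" using d(2) by (simp add: dist_norm less_imp_le)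
    qed
    also have "\<dots> = \<epsilon> * h" using h by simp
    finally have "norm (integral {\<tau>..\<tau>+h} g - h *\<^sub>R g \<tau>) \<le> \<epsilon> * h" .
    moreover have "(1/h) *\<^sub>R integral {\<tau>..\<tau>+h} g - g \<tau> = (1/h) *\<^sub>R (integral {\<tau>..\<tau>+h} g - h *\<^sub>R g \<tau>)"
      using h by (simp add: algebra_simps)
    ultimately show "norm ((1/h) *\<^sub>R integral {\<tau>..\<tau>+h} g - g \<tau>) \<le> \<epsilon>"
      using h by (simp add: divide_simps mult.commute)
  qed
qed




lemma hvd_cmul:
  "(f has_vector_derivative f') F \<Longrightarrow> ((\<lambda>x. c *\<^sub>R f x) has_vector_derivative (c *\<^sub>R f')) F"
  using bounded_linear.has_vector_derivative[OF bounded_linear_scaleR_right] by blast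

lemma hvd_sq:
  assumes "(Y has_vector_derivative Y') (at x within S)"
  shows "((\<lambda>\<tau>. (norm (Y \<tau>))\<^sup>2) has_vector_derivative (2 * inner (Y x) Y')) (at x within S)"
proof -
  have "((\<lambda>\<tau>. inner (Y \<tau>) (Y \<tau>)) has_vector_derivative (inner (Y x) Y' + inner Y' (Y x))) (at x within S)"
    by (rule bounded_bilinear.has_vector_derivative[OF bounded_bilinear_inner assms assms])
  thus ?thesis by (simp add: power2_norm_eq_inner inner_commute)
qed

lemma hi_inner:
  fixes g :: "real \<Rightarrow> 'a::real_inner"
  shows "(g has_integral I) S \<Longrightarrow> ((\<lambda>\<sigma>. inner (g \<sigma>) c) has_integral inner I c) S"
  using has_integral_linear[OF _ bounded_linear_inner_left] by (simp add: o_def)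

lemma steklov_deriv:
  fixes g :: "real \<Rightarrow> 'a::{real_inner,complete_space}"
  assumes cont: "continuous_on {a..b} g" and "a \<le> s" "t + h \<le> b" "0 \<le> h" "\<tau> \<in> {s..t}"
  shows "((\<lambda>x. integral {x..x+h} g) has_vector_derivative (g (\<tau>+h) - g \<tau>)) (at \<tau> within {s..t})"
proof -
  define G where "G x = integral {a..x} g" for x
  have eq: "integral {x..x+h} g = G (x+h) - G x" if "x \<in> {s..t}" for x
  proof -
    have "continuous_on {a..x+h} g" using cont that assms by (auto intro: continuous_on_subset)
    from integral_combine'[OF _ _ this, of x] that assms
    show ?thesis unfolding G_def by (simp add: algebra_simps)
  qed
  have d1: "(G has_vector_derivative g (\<tau>+h)) (at (\<tau>+h) within {a..b})"
    unfolding G_def using assms by (intro integral_deriv'[OF cont]) auto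
  have "((\<lambda>x. x + h) has_vector_derivative 1) (at \<tau> within {s..t})"
    by (auto intro!: derivative_eq_intros)
  moreover have "(G has_vector_derivative g (\<tau>+h)) (at (\<tau>+h) within (\<lambda>x. x + h) ` {s..t})"
    by (rule has_vector_derivative_within_subset[OF d1]) (use assms in auto)
  ultimately have d1': "((\<lambda>x. G (x + h)) has_vector_derivative g (\<tau>+h)) (at \<tau> within {s..t})"
    using vector_diff_chain_within[of "\<lambda>x. x + h" 1 \<tau> "{s..t}" G "g (\<tau>+h)"] by (simp add: o_def)
  have d2: "(G has_vector_derivative g \<tau>) (at \<tau> within {s..t})"
    unfolding G_def using assms
    by (intro has_vector_derivative_within_subset[OF integral_deriv'[OF cont]]) auto
  have "((\<lambda>x. G (x + h) - G x) has_vector_derivative (g (\<tau>+h) - g \<tau>)) (at \<tau> within {s..t})"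
    by (rule has_vector_derivative_diff[OF d1' d2])
  thus ?thesis
    by (rule has_vector_derivative_transform_within[OF _ zero_less_one assms(5)]) (use eq in auto)
qed




lemma kin_h:
  fixes \<iota> :: "'v::{real_inner,complete_space} \<Rightarrow>\<^sub>L 'h::{real_inner,complete_space}"
    and w :: "real \<Rightarrow> 'v" and w' k :: "real \<Rightarrow> 'h"
  assumes st: "a \<le> s" "s \<le> t" "0 < h" "t + h \<le> b"
    and cw: "continuous_on {a..b} w" and cw': "continuous_on {a..b} w'" and ck: "continuous_on {a..b} k"
    and der: "\<And>\<tau>. \<tau> \<in> {a..b} \<Longrightarrow> ((\<lambda>\<sigma>. \<iota> (w \<sigma>)) has_vector_derivative w' \<tau>) (at \<tau> within {a..b})"
    and weak: "\<And>v s1 s2. a \<le> s1 \<Longrightarrow> s1 \<le> s2 \<Longrightarrow> s2 \<le> b \<Longrightarrow>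
       ((\<lambda>\<sigma>. - inner (w \<sigma>) v + inner (k \<sigma>) (\<iota> v)) has_integral
          (inner (w' s2) (\<iota> v) - inner (w' s1) (\<iota> v))) {s1..s2}"
  defines "Y \<equiv> \<lambda>\<tau>. (1/h) *\<^sub>R integral {\<tau>..\<tau>+h} w"
    and "Z \<equiv> \<lambda>\<tau>. (1/h) *\<^sub>R integral {\<tau>..\<tau>+h} w'"
    and "Kh \<equiv> \<lambda>\<tau>. (1/h) *\<^sub>R integral {\<tau>..\<tau>+h} k"
  shows "((\<lambda>\<tau>. inner (Kh \<tau>) (Z \<tau>)) has_integral
      ((1/2) * ((norm (Y t))\<^sup>2 + (norm (Z t))\<^sup>2) - (1/2) * ((norm (Y s))\<^sup>2 + (norm (Z s))\<^sup>2))) {s..t}"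
proof -
  define \<Phi> where "\<Phi> \<tau> = (1/2) * ((norm (Y \<tau>))\<^sup>2 + (norm (Z \<tau>))\<^sup>2)" for \<tau>
  define V where "V \<tau> = (1/h) *\<^sub>R (w (\<tau>+h) - w \<tau>)" for \<tau>
  define Z' where "Z' \<tau> = (1/h) *\<^sub>R (w' (\<tau>+h) - w' \<tau>)" for \<tau>
  have sub: "\<And>\<tau>. \<tau> \<in> {s..t} \<Longrightarrow> {\<tau>..\<tau>+h} \<subseteq> {a..b}" using st by auto
  have Zeq: "Z \<tau> = \<iota> (V \<tau>)" if \<tau>: "\<tau> \<in> {s..t}" for \<tau>
  proof -
    have "(w' has_integral (\<iota> (w (\<tau>+h)) - \<iota> (w \<tau>))) {\<tau>..\<tau>+h}"
    proof (rule ftc)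
      show "\<tau> \<le> \<tau> + h" using st by simp
      fix x assume "x \<in> {\<tau>..\<tau>+h}"
      hence "x \<in> {a..b}" using sub[OF \<tau>] by auto
      thus "((\<lambda>\<sigma>. \<iota> (w \<sigma>)) has_vector_derivative w' x) (at x within {\<tau>..\<tau>+h})"
        by (rule has_vector_derivative_within_subset[OF der sub[OF \<tau>]])
    qed
    hence "integral {\<tau>..\<tau>+h} w' = \<iota> (w (\<tau>+h)) - \<iota> (w \<tau>)" by (rule integral_unique)
    thus ?thesis unfolding Z_def V_def by (simp add: blinfun.scaleR_right blinfun.diff_right)
  qed
  have dY: "(Y has_vector_derivative V \<tau>) (at \<tau> within {s..t})" if "\<tau> \<in> {s..t}" for \<tau>
    unfolding Y_def V_def
    by (rule hvd_cmul, rule steklov_deriv[OF cw]) (use st that in auto)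
  have dZ: "(Z has_vector_derivative Z' \<tau>) (at \<tau> within {s..t})" if "\<tau> \<in> {s..t}" for \<tau>
    unfolding Z_def Z'_def
    by (rule hvd_cmul, rule steklov_deriv[OF cw']) (use st that in auto)
  have key: "inner (Y \<tau>) (V \<tau>) + inner (Z \<tau>) (Z' \<tau>) = inner (Kh \<tau>) (Z \<tau>)" if \<tau>: "\<tau> \<in> {s..t}" for \<tau>
  proof -
    define v where "v = V \<tau>"
    define Iw where "Iw = integral {\<tau>..\<tau>+h} w"
    define Ik where "Ik = integral {\<tau>..\<tau>+h} k"
    have cw1: "continuous_on {\<tau>..\<tau>+h} w" and ck1: "continuous_on {\<tau>..\<tau>+h} k"
      using cw ck sub[OF \<tau>] by (auto intro: continuous_on_subset)
    have h1: "((\<lambda>\<sigma>. - inner (w \<sigma>) v + inner (k \<sigma>) (\<iota> v)) has_integral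
          (inner (w' (\<tau>+h)) (\<iota> v) - inner (w' \<tau>) (\<iota> v))) {\<tau>..\<tau>+h}"
      by (rule weak) (use st \<tau> in auto)
    have "((\<lambda>\<sigma>. - inner (w \<sigma>) v + inner (k \<sigma>) (\<iota> v)) has_integral (- inner Iw v + inner Ik (\<iota> v))) {\<tau>..\<tau>+h}"
      unfolding Iw_def Ik_def
      by (intro has_integral_add has_integral_neg hi_inner integrable_integral int_cont cw1 ck1)
    from has_integral_unique[OF h1 this]
    have e1: "inner (w' (\<tau>+h) - w' \<tau>) (\<iota> v) = - inner Iw v + inner Ik (\<iota> v)"
      by (simp add: inner_diff_left)
    have "inner (Y \<tau>) (V \<tau>) + inner (Z \<tau>) (Z' \<tau>) = (1/h) * inner Iw v + (1/h) * inner (w' (\<tau>+h) - w' \<tau>) (\<iota> v)"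
      unfolding Zeq[OF \<tau>] Y_def Z'_def Iw_def v_def by (simp add: inner_commute)
    also have "\<dots> = (1/h) * inner Ik (\<iota> v)" unfolding e1 by (simp add: algebra_simps)
    also have "\<dots> = inner (Kh \<tau>) (Z \<tau>)" unfolding Zeq[OF \<tau>] Kh_def Ik_def v_def by simp
    finally show ?thesis .
  qed
  have "((\<lambda>\<tau>. inner (Kh \<tau>) (Z \<tau>)) has_integral (\<Phi> t - \<Phi> s)) {s..t}"
  proof (rule fundamental_theorem_of_calculus[OF st(2)])
    fix x assume x: "x \<in> {s..t}"
    have "(\<Phi> has_vector_derivative (1/2) * (2 * inner (Y x) (V x) + 2 * inner (Z x) (Z' x))) (at x within {s..t})"
      unfolding \<Phi>_def
      using hvd_cmul[OF has_vector_derivative_add[OF hvd_sq[OF dY[OF x]] hvd_sq[OF dZ[OF x]]], of "1/2"]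
      by simp
    thus "(\<Phi> has_vector_derivative inner (Kh x) (Z x)) (at x within {s..t})"
      using key[OF x] by (simp add: algebra_simps)
  qed
  thus ?thesis unfolding \<Phi>_def .
qed




lemma lin4:
  fixes x1 x2 x3 x4 y1 y2 y3 y4 A B :: real
  assumes "\<bar>y1 - x1\<bar> \<le> A" "\<bar>y2 - x2\<bar> \<le> A" "\<bar>y3 - x3\<bar> \<le> B" "\<bar>y4 - x4\<bar> \<le> B"
  shows "\<bar>(1/2*(x1+x3) - 1/2*(x2+x4)) - (1/2*(y1+y3) - 1/2*(y2+y4))\<bar> \<le> A + B"
proof -
  have a: "y1 - x1 \<le> A" "x1 - y1 \<le> A" "y2 - x2 \<le> A" "x2 - y2 \<le> A"
     "y3 - x3 \<le> B" "x3 - y3 \<le> B" "y4 - x4 \<le> B" "x4 - y4 \<le> B"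
    using assms by (auto simp: abs_le_iff)
  show ?thesis unfolding abs_le_iff using a by (intro conjI; simp add: field_simps)
qed

lemma cont_bound:
  fixes g :: "real \<Rightarrow> 'a::real_normed_vector"
  assumes "continuous_on {a..b} g"
  obtains B where "B \<ge> 0" "\<And>x. x \<in> {a..b} \<Longrightarrow> norm (g x) \<le> B"
proof -
  have "bounded (g ` {a..b})"
    by (rule compact_imp_bounded, rule compact_continuous_image[OF assms compact_Icc])
  then obtain B where "B > 0" "\<And>y. y \<in> g ` {a..b} \<Longrightarrow> norm y \<le> B" by (auto simp: bounded_pos)
  thus ?thesis using that[of B] by auto
qed

lemma sq_norm_close:
  fixes x y :: "'a::real_normed_vector"
  assumes "norm x \<le> B" "norm (y - x) \<le> e" "e \<le> 1"
  shows "\<bar>(norm y)\<^sup>2 - (norm x)\<^sup>2\<bar> \<le> (2*B+1)*e"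
proof -
  have d: "\<bar>norm y - norm x\<bar> \<le> e" using norm_triangle_ineq3[of y x] assms(2) by simp
  have ny: "norm y \<le> B + 1" using d assms by simp
  have "(norm y)\<^sup>2 - (norm x)\<^sup>2 = (norm y - norm x) * (norm y + norm x)"
    by (simp add: power2_eq_square algebra_simps)
  hence "\<bar>(norm y)\<^sup>2 - (norm x)\<^sup>2\<bar> = \<bar>norm y - norm x\<bar> * (norm y + norm x)"
    by (simp add: abs_mult)
  also have "\<dots> \<le> e * (2*B+1)"
    using d ny assms by (intro mult_mono) auto
  finally show ?thesis by (simp add: mult.commute)
qed

lemma inner_close:
  fixes x y x' y' :: "'a::real_inner"
  assumes "norm x \<le> B1" "norm y \<le> B2" "norm (x' - x) \<le> e" "norm (y' - y) \<le> e" "e \<le> 1"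
  shows "\<bar>inner x' y' - inner x y\<bar> \<le> (B1+B2+1)*e"
proof -
  have e0: "0 \<le> e" using assms(3) by (meson norm_ge_zero order_trans)
  have "inner x' y' - inner x y = inner (x' - x) y' + inner x (y' - y)"
    by (simp add: inner_diff_left inner_diff_right)
  hence "\<bar>inner x' y' - inner x y\<bar> \<le> \<bar>inner (x' - x) y'\<bar> + \<bar>inner x (y' - y)\<bar>" by simp
  also have "\<bar>inner (x' - x) y'\<bar> \<le> e * (B2 + 1)"
  proof -
    have ny: "norm y' \<le> B2 + 1" using norm_triangle_ineq2[of y' y] assms by simp
    have "norm (x' - x) * norm y' \<le> e * (B2 + 1)" using ny assms e0 by (intro mult_mono) auto
    thus ?thesis using Cauchy_Schwarz_ineq2[of "x' - x" y'] by linarith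
  qed
  also have "\<bar>inner x (y' - y)\<bar> \<le> B1 * e"
  proof -
    have "norm x * norm (y' - y) \<le> B1 * e" using assms e0 by (intro mult_mono) (auto intro: order_trans[OF norm_ge_zero])
    thus ?thesis using Cauchy_Schwarz_ineq2[of x "y' - y"] by linarith
  qed
  finally show ?thesis by (simp add: algebra_simps)
qed

lemma eps_zero:
  fixes x C :: real
  assumes "\<And>e. 0 < e \<Longrightarrow> e \<le> 1 \<Longrightarrow> \<bar>x\<bar> \<le> C * e"
  shows "x = 0"
proof (rule ccontr)
  assume "x \<noteq> 0"
  define e where "e = min 1 (\<bar>x\<bar> / (2 * (\<bar>C\<bar> + 1)))"
  have e: "0 < e" "e \<le> 1" using \<open>x \<noteq> 0\<close> by (auto simp: e_def)
  have "\<bar>x\<bar> \<le> C * e" by (rule assms[OF e])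
  also have "\<dots> \<le> (\<bar>C\<bar> + 1) * e" using e by (intro mult_right_mono) auto
  also have "\<dots> \<le> (\<bar>C\<bar> + 1) * (\<bar>x\<bar> / (2 * (\<bar>C\<bar> + 1)))"
    by (intro mult_left_mono) (auto simp: e_def)
  also have "\<dots> = \<bar>x\<bar> / 2" by (simp add: field_simps)
  finally show False using \<open>x \<noteq> 0\<close> by simp
qed




lemma kin_core:
  fixes \<iota> :: "'v::{real_inner,complete_space} \<Rightarrow>\<^sub>L 'h::{real_inner,complete_space}"
    and w :: "real \<Rightarrow> 'v" and w' k :: "real \<Rightarrow> 'h"
  assumes st: "a \<le> s" "s \<le> t" "t < b"
    and cw: "continuous_on {a..b} w" and cw': "continuous_on {a..b} w'" and ck: "continuous_on {a..b} k"
    and der: "\<And>\<tau>. \<tau> \<in> {a..b} \<Longrightarrow> ((\<lambda>\<sigma>. \<iota> (w \<sigma>)) has_vector_derivative w' \<tau>) (at \<tau> within {a..b})"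
    and weak: "\<And>v s1 s2. a \<le> s1 \<Longrightarrow> s1 \<le> s2 \<Longrightarrow> s2 \<le> b \<Longrightarrow>
       ((\<lambda>\<sigma>. - inner (w \<sigma>) v + inner (k \<sigma>) (\<iota> v)) has_integral
          (inner (w' s2) (\<iota> v) - inner (w' s1) (\<iota> v))) {s1..s2}"
  shows "((\<lambda>\<sigma>. inner (k \<sigma>) (w' \<sigma>)) has_integral
      ((1/2) * ((norm (w t))\<^sup>2 + (norm (w' t))\<^sup>2) - (1/2) * ((norm (w s))\<^sup>2 + (norm (w' s))\<^sup>2))) {s..t}"
proof -
  obtain Bw where Bw: "Bw \<ge> 0" "\<And>x. x \<in> {a..b} \<Longrightarrow> norm (w x) \<le> Bw" using cont_bound[OF cw] by blast
  obtain Bw' where Bw': "Bw' \<ge> 0" "\<And>x. x \<in> {a..b} \<Longrightarrow> norm (w' x) \<le> Bw'" using cont_bound[OF cw'] by blast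
  obtain Bk where Bk: "Bk \<ge> 0" "\<And>x. x \<in> {a..b} \<Longrightarrow> norm (k x) \<le> Bk" using cont_bound[OF ck] by blast
  have sub: "{s..t} \<subseteq> {a..b}" using st by auto
  have ci: "continuous_on {s..t} (\<lambda>\<sigma>. inner (k \<sigma>) (w' \<sigma>))"
    using continuous_on_inner[OF ck cw'] continuous_on_subset[OF _ sub] by blast
  define R where "R = integral {s..t} (\<lambda>\<sigma>. inner (k \<sigma>) (w' \<sigma>))"
  have hR: "((\<lambda>\<sigma>. inner (k \<sigma>) (w' \<sigma>)) has_integral R) {s..t}"
    unfolding R_def using integrable_continuous_real[OF ci] by (simp add: integrable_integral)
  define L where "L = (1/2) * ((norm (w t))\<^sup>2 + (norm (w' t))\<^sup>2) - (1/2) * ((norm (w s))\<^sup>2 + (norm (w' s))\<^sup>2)"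
  define C where "C = (2*Bw+1) + (2*Bw'+1) + (t - s) * (Bk + Bw' + 1)"
  have "L - R = 0"
  proof (rule eps_zero[of _ C])
    fix e :: real assume e: "0 < e" "e \<le> 1"
    obtain d1 where d1: "d1 > 0" "\<And>h \<tau>. 0 < h \<Longrightarrow> h < d1 \<Longrightarrow> a \<le> \<tau> \<Longrightarrow> \<tau> + h \<le> b \<Longrightarrow>
        norm ((1/h) *\<^sub>R integral {\<tau>..\<tau>+h} w - w \<tau>) \<le> e" using steklov_unif[OF cw e(1)] by blast
    obtain d2 where d2: "d2 > 0" "\<And>h \<tau>. 0 < h \<Longrightarrow> h < d2 \<Longrightarrow> a \<le> \<tau> \<Longrightarrow> \<tau> + h \<le> b \<Longrightarrow>
        norm ((1/h) *\<^sub>R integral {\<tau>..\<tau>+h} w' - w' \<tau>) \<le> e" using steklov_unif[OF cw' e(1)] by blast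
    obtain d3 where d3: "d3 > 0" "\<And>h \<tau>. 0 < h \<Longrightarrow> h < d3 \<Longrightarrow> a \<le> \<tau> \<Longrightarrow> \<tau> + h \<le> b \<Longrightarrow>
        norm ((1/h) *\<^sub>R integral {\<tau>..\<tau>+h} k - k \<tau>) \<le> e" using steklov_unif[OF ck e(1)] by blast
    define h where "h = min (min d1 (min d2 d3) / 2) (b - t)"
    have h: "0 < h" "h < d1" "h < d2" "h < d3" "t + h \<le> b" using d1 d2 d3 st by (auto simp: h_def)
    define Y where "Y = (\<lambda>\<tau>. (1/h) *\<^sub>R integral {\<tau>..\<tau>+h} w)"
    define Z where "Z = (\<lambda>\<tau>. (1/h) *\<^sub>R integral {\<tau>..\<tau>+h} w')"
    define Kh where "Kh = (\<lambda>\<tau>. (1/h) *\<^sub>R integral {\<tau>..\<tau>+h} k)"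
    have ev: "norm (Y \<tau> - w \<tau>) \<le> e" "norm (Z \<tau> - w' \<tau>) \<le> e" "norm (Kh \<tau> - k \<tau>) \<le> e"
      if "\<tau> \<in> {s..t}" for \<tau>
      using d1(2)[OF h(1,2)] d2(2)[OF h(1,3)] d3(2)[OF h(1,4)] that st h(5)
      unfolding Y_def Z_def Kh_def by auto
    have hK: "((\<lambda>\<tau>. inner (Kh \<tau>) (Z \<tau>)) has_integral
      ((1/2) * ((norm (Y t))\<^sup>2 + (norm (Z t))\<^sup>2) - (1/2) * ((norm (Y s))\<^sup>2 + (norm (Z s))\<^sup>2))) {s..t}"
      unfolding Y_def Z_def Kh_def by (rule kin_h[OF st(1,2) h(1,5) cw cw' ck der weak])
    define Lh where "Lh = (1/2) * ((norm (Y t))\<^sup>2 + (norm (Z t))\<^sup>2) - (1/2) * ((norm (Y s))\<^sup>2 + (norm (Z s))\<^sup>2)"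
    have tS: "t \<in> {s..t}" "s \<in> {s..t}" "t \<in> {a..b}" "s \<in> {a..b}" using st by auto
    have "\<bar>L - Lh\<bar> \<le> (2*Bw+1)*e + (2*Bw'+1)*e"
    proof -
      have a1: "\<bar>(norm (Y t))\<^sup>2 - (norm (w t))\<^sup>2\<bar> \<le> (2*Bw+1)*e"
        by (rule sq_norm_close[OF Bw(2)[OF tS(3)] ev(1)[OF tS(1)] e(2)])
      have a2: "\<bar>(norm (Y s))\<^sup>2 - (norm (w s))\<^sup>2\<bar> \<le> (2*Bw+1)*e"
        by (rule sq_norm_close[OF Bw(2)[OF tS(4)] ev(1)[OF tS(2)] e(2)])
      have a3: "\<bar>(norm (Z t))\<^sup>2 - (norm (w' t))\<^sup>2\<bar> \<le> (2*Bw'+1)*e"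
        by (rule sq_norm_close[OF Bw'(2)[OF tS(3)] ev(2)[OF tS(1)] e(2)])
      have a4: "\<bar>(norm (Z s))\<^sup>2 - (norm (w' s))\<^sup>2\<bar> \<le> (2*Bw'+1)*e"
        by (rule sq_norm_close[OF Bw'(2)[OF tS(4)] ev(2)[OF tS(2)] e(2)])
      show ?thesis unfolding L_def Lh_def by (rule lin4[OF a1 a2 a3 a4])
    qed
    moreover have "\<bar>Lh - R\<bar> \<le> (t - s) * (Bk + Bw' + 1) * e"
    proof -
      have "((\<lambda>\<tau>. inner (Kh \<tau>) (Z \<tau>) - inner (k \<tau>) (w' \<tau>)) has_integral (Lh - R)) {s..t}"
        unfolding Lh_def by (rule has_integral_diff[OF hK hR])
      hence "norm (Lh - R) \<le> ((Bk + Bw' + 1) * e) * content (cbox s t)"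
      proof (intro has_integral_bound[where f="\<lambda>\<tau>. inner (Kh \<tau>) (Z \<tau>) - inner (k \<tau>) (w' \<tau>)"])
        show "0 \<le> (Bk + Bw' + 1) * e" using Bk Bw' e by simp
      next
        fix x assume x: "x \<in> cbox s t"
        hence x': "x \<in> {s..t}" "x \<in> {a..b}" using st by auto
        show "norm (inner (Kh x) (Z x) - inner (k x) (w' x)) \<le> (Bk + Bw' + 1) * e"
          using inner_close[OF Bk(2)[OF x'(2)] Bw'(2)[OF x'(2)] ev(3)[OF x'(1)] ev(2)[OF x'(1)] e(2)] by simp
      qed simp
      thus ?thesis using st by (simp add: mult_ac)
    qed
    ultimately have "\<bar>L - R\<bar> \<le> (2*Bw+1)*e + (2*Bw'+1)*e + (t - s) * (Bk + Bw' + 1) * e" by linarith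
    thus "\<bar>L - R\<bar> \<le> C * e" unfolding C_def by (simp add: algebra_simps)
  qed
  thus ?thesis using hR unfolding L_def by simp
qed




lemma loclip_isCont:
  fixes f :: "'a::real_normed_vector \<Rightarrow> 'b::real_normed_vector"
  assumes lip: "\<And>R. \<exists>L. \<forall>x y. norm x \<le> R \<longrightarrow> norm y \<le> R \<longrightarrow> norm (f x - f y) \<le> L * norm (x - y)"
  shows "isCont f x"
proof -
  obtain L where L: "\<And>y z. norm y \<le> norm x + 1 \<Longrightarrow> norm z \<le> norm x + 1 \<Longrightarrow> norm (f y - f z) \<le> L * norm (y - z)"
    using lip[of "norm x + 1"] by blast
  define L' where "L' = max L 0 + 1"
  have L'p: "L' > 0" unfolding L'_def by simp
  show ?thesis unfolding isCont_def LIM_eq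
  proof (intro allI impI)
    fix r :: real assume r: "r > 0"
    show "\<exists>s>0. \<forall>y. y \<noteq> x \<and> norm (y - x) < s \<longrightarrow> norm (f y - f x) < r"
    proof (intro exI[of _ "min 1 (r / L')"] conjI allI impI)
      show "0 < min 1 (r / L')" using r L'p by simp
      fix y assume y: "y \<noteq> x \<and> norm (y - x) < min 1 (r / L')"
      have ny: "norm y \<le> norm x + 1" using y norm_triangle_ineq2[of y x] by simp
      have "norm (f y - f x) \<le> L * norm (y - x)" by (rule L[OF ny]) simp
      also have "\<dots> \<le> L' * norm (y - x)" unfolding L'_def by (intro mult_right_mono) auto
      also have "\<dots> < L' * (r / L')" using y L'p by (intro mult_strict_left_mono) auto
      also have "\<dots> = r" using L'p by simp
      finally show "norm (f y - f x) < r" .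
    qed
  qed
qed

lemma steklov_iota:
  fixes \<iota> :: "'v::{real_inner,complete_space} \<Rightarrow>\<^sub>L 'h::{real_inner,complete_space}"
    and w :: "real \<Rightarrow> 'v" and w' :: "real \<Rightarrow> 'h"
  assumes "a \<le> \<tau>" "0 < h" "\<tau> + h \<le> b"
    and der: "\<And>\<tau>. \<tau> \<in> {a..b} \<Longrightarrow> ((\<lambda>\<sigma>. \<iota> (w \<sigma>)) has_vector_derivative w' \<tau>) (at \<tau> within {a..b})"
  shows "(1/h) *\<^sub>R integral {\<tau>..\<tau>+h} w' = \<iota> ((1/h) *\<^sub>R (w (\<tau>+h) - w \<tau>))"
proof -
  have sub: "{\<tau>..\<tau>+h} \<subseteq> {a..b}" using assms by auto
  have "(w' has_integral (\<iota> (w (\<tau>+h)) - \<iota> (w \<tau>))) {\<tau>..\<tau>+h}"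
  proof (rule ftc)
    show "\<tau> \<le> \<tau> + h" using assms by simp
    fix x assume "x \<in> {\<tau>..\<tau>+h}"
    hence "x \<in> {a..b}" using sub by auto
    thus "((\<lambda>\<sigma>. \<iota> (w \<sigma>)) has_vector_derivative w' x) (at x within {\<tau>..\<tau>+h})"
      by (rule has_vector_derivative_within_subset[OF der sub])
  qed
  hence "integral {\<tau>..\<tau>+h} w' = \<iota> (w (\<tau>+h)) - \<iota> (w \<tau>)" by (rule integral_unique)
  thus ?thesis by (simp add: blinfun.scaleR_right blinfun.diff_right)
qed

lemma F_h:
  fixes \<iota> :: "'v::{real_inner,complete_space} \<Rightarrow>\<^sub>L 'h::{real_inner,complete_space}"
    and w :: "real \<Rightarrow> 'v" and w' :: "real \<Rightarrow> 'h" and f :: "'v \<Rightarrow> 'h" and F :: "'v \<Rightarrow> real"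
  assumes st: "a \<le> s" "s \<le> t" "0 < h" "t + h \<le> b"
    and cw: "continuous_on {a..b} w"
    and der: "\<And>\<tau>. \<tau> \<in> {a..b} \<Longrightarrow> ((\<lambda>\<sigma>. \<iota> (w \<sigma>)) has_vector_derivative w' \<tau>) (at \<tau> within {a..b})"
    and F_deriv: "\<And>x. (F has_derivative (\<lambda>v. inner (f x) (\<iota> v))) (at x)"
  defines "Y \<equiv> \<lambda>\<tau>. (1/h) *\<^sub>R integral {\<tau>..\<tau>+h} w"
    and "Z \<equiv> \<lambda>\<tau>. (1/h) *\<^sub>R integral {\<tau>..\<tau>+h} w'"
  shows "((\<lambda>\<tau>. inner (f (Y \<tau>)) (Z \<tau>)) has_integral (F (Y t) - F (Y s))) {s..t}"
proof (rule fundamental_theorem_of_calculus[OF st(2)])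
  fix x assume x: "x \<in> {s..t}"
  define V where "V = (1/h) *\<^sub>R (w (x+h) - w x)"
  have dY: "(Y has_vector_derivative V) (at x within {s..t})"
    unfolding Y_def V_def
    by (rule hvd_cmul, rule steklov_deriv[OF cw]) (use st x in auto)
  have Zx: "Z x = \<iota> V" unfolding Z_def V_def by (rule steklov_iota[OF _ st(3) _ der]) (use st x in auto)
  have "((\<lambda>\<tau>. F (Y \<tau>)) has_derivative (\<lambda>d. inner (f (Y x)) (\<iota> (d *\<^sub>R V)))) (at x within {s..t})"
    by (rule has_derivative_compose[OF dY[unfolded has_vector_derivative_def] F_deriv])
  hence "((\<lambda>\<tau>. F (Y \<tau>)) has_derivative (\<lambda>d. d *\<^sub>R inner (f (Y x)) (Z x))) (at x within {s..t})"
    unfolding Zx by (simp add: blinfun.scaleR_right)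
  thus "((\<lambda>\<tau>. F (Y \<tau>)) has_vector_derivative inner (f (Y x)) (Z x)) (at x within {s..t})"
    unfolding has_vector_derivative_def .
qed




lemma F_core:
  fixes \<iota> :: "'v::{real_inner,complete_space} \<Rightarrow>\<^sub>L 'h::{real_inner,complete_space}"
    and w :: "real \<Rightarrow> 'v" and w' :: "real \<Rightarrow> 'h" and f :: "'v \<Rightarrow> 'h" and F :: "'v \<Rightarrow> real"
  assumes st: "a \<le> s" "s \<le> t" "t < b"
    and cw: "continuous_on {a..b} w" and cw': "continuous_on {a..b} w'"
    and der: "\<And>\<tau>. \<tau> \<in> {a..b} \<Longrightarrow> ((\<lambda>\<sigma>. \<iota> (w \<sigma>)) has_vector_derivative w' \<tau>) (at \<tau> within {a..b})"
    and F_deriv: "\<And>x. (F has_derivative (\<lambda>v. inner (f x) (\<iota> v))) (at x)"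
    and lip: "\<And>R. \<exists>L. \<forall>x y. norm x \<le> R \<longrightarrow> norm y \<le> R \<longrightarrow> norm (f x - f y) \<le> L * norm (x - y)"
  shows "((\<lambda>\<sigma>. inner (f (w \<sigma>)) (w' \<sigma>)) has_integral (F (w t) - F (w s))) {s..t}"
proof -
  have fc: "\<And>x. isCont f x" by (rule loclip_isCont[OF lip])
  have cfw: "continuous_on {a..b} (\<lambda>\<sigma>. f (w \<sigma>))"
    using continuous_on_compose2[OF continuous_at_imp_continuous_on[of UNIV f] cw] fc by auto
  obtain Bw where Bw: "Bw \<ge> 0" "\<And>x. x \<in> {a..b} \<Longrightarrow> norm (w x) \<le> Bw" using cont_bound[OF cw] by blast
  obtain Bw' where Bw': "Bw' \<ge> 0" "\<And>x. x \<in> {a..b} \<Longrightarrow> norm (w' x) \<le> Bw'" using cont_bound[OF cw'] by blast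
  obtain Bf where Bf: "Bf \<ge> 0" "\<And>x. x \<in> {a..b} \<Longrightarrow> norm (f (w x)) \<le> Bf" using cont_bound[OF cfw] by blast
  obtain L0 where L0: "\<And>x y. norm x \<le> Bw + 1 \<Longrightarrow> norm y \<le> Bw + 1 \<Longrightarrow> norm (f x - f y) \<le> L0 * norm (x - y)"
    using lip[of "Bw + 1"] by blast
  define L where "L = max L0 0 + 1"
  have Lp: "L \<ge> 1" unfolding L_def by simp
  have Lip: "norm (f x - f y) \<le> L * norm (x - y)" if "norm x \<le> Bw + 1" "norm y \<le> Bw + 1" for x y
  proof -
    have "norm (f x - f y) \<le> L0 * norm (x - y)" by (rule L0[OF that])
    also have "\<dots> \<le> L * norm (x - y)" unfolding L_def by (intro mult_right_mono) auto
    finally show ?thesis .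
  qed
  have sub: "{s..t} \<subseteq> {a..b}" using st by auto
  have ci: "continuous_on {s..t} (\<lambda>\<sigma>. inner (f (w \<sigma>)) (w' \<sigma>))"
    using continuous_on_inner[OF cfw cw'] continuous_on_subset[OF _ sub] by blast
  define R where "R = integral {s..t} (\<lambda>\<sigma>. inner (f (w \<sigma>)) (w' \<sigma>))"
  have hR: "((\<lambda>\<sigma>. inner (f (w \<sigma>)) (w' \<sigma>)) has_integral R) {s..t}"
    unfolding R_def using integrable_continuous_real[OF ci] by (simp add: integrable_integral)
  define Lf where "Lf = F (w t) - F (w s)"
  define C where "C = 2 + (t - s) * (Bf + Bw' + 1)"
  have FC: "\<exists>d>0. \<forall>y. norm (y - x) < d \<longrightarrow> \<bar>F y - F x\<bar> < e" if e0: "e > 0" for x e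
  proof -
    have "isCont F x" using has_derivative_continuous[OF F_deriv] by simp
    then obtain d where "d > 0" "\<And>y. y \<noteq> x \<and> norm (y - x) < d \<Longrightarrow> norm (F y - F x) < e"
      unfolding isCont_def LIM_eq using e0 by meson
    thus ?thesis by (intro exI[of _ d]) (metis abs_zero cancel_comm_monoid_add_class.diff_cancel e0 real_norm_def)
  qed
  have "Lf - R = 0"
  proof (rule eps_zero[of _ C])
    fix e :: real assume e: "0 < e" "e \<le> 1"
    obtain dt where dt: "dt > 0" "\<And>y. norm (y - w t) < dt \<Longrightarrow> \<bar>F y - F (w t)\<bar> < e" using FC[OF e(1)] by blast
    obtain ds where ds: "ds > 0" "\<And>y. norm (y - w s) < ds \<Longrightarrow> \<bar>F y - F (w s)\<bar> < e" using FC[OF e(1)] by blast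
    define \<eta> where "\<eta> = min (e / L) (min dt ds / 2)"
    have \<eta>: "\<eta> > 0" "\<eta> < dt" "\<eta> < ds" "L * \<eta> \<le> e" "\<eta> \<le> e" "\<eta> \<le> 1"
    proof -
      show "\<eta> > 0" "\<eta> < dt" "\<eta> < ds" using e dt ds Lp by (auto simp: \<eta>_def)
      have "\<eta> \<le> e / L" unfolding \<eta>_def by simp
      thus "L * \<eta> \<le> e" using Lp by (simp add: field_simps)
      moreover have "\<eta> \<le> L * \<eta>" using Lp \<open>\<eta> > 0\<close> by simp
      ultimately show "\<eta> \<le> e" by simp
      thus "\<eta> \<le> 1" using e by simp
    qed
    obtain d1 where d1: "d1 > 0" "\<And>h \<tau>. 0 < h \<Longrightarrow> h < d1 \<Longrightarrow> a \<le> \<tau> \<Longrightarrow> \<tau> + h \<le> b \<Longrightarrow>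
        norm ((1/h) *\<^sub>R integral {\<tau>..\<tau>+h} w - w \<tau>) \<le> \<eta>" using steklov_unif[OF cw \<eta>(1)] by blast
    obtain d2 where d2: "d2 > 0" "\<And>h \<tau>. 0 < h \<Longrightarrow> h < d2 \<Longrightarrow> a \<le> \<tau> \<Longrightarrow> \<tau> + h \<le> b \<Longrightarrow>
        norm ((1/h) *\<^sub>R integral {\<tau>..\<tau>+h} w' - w' \<tau>) \<le> \<eta>" using steklov_unif[OF cw' \<eta>(1)] by blast
    define h where "h = min (min d1 d2 / 2) (b - t)"
    have h: "0 < h" "h < d1" "h < d2" "t + h \<le> b" using d1 d2 st by (auto simp: h_def)
    define Y where "Y = (\<lambda>\<tau>. (1/h) *\<^sub>R integral {\<tau>..\<tau>+h} w)"
    define Z where "Z = (\<lambda>\<tau>. (1/h) *\<^sub>R integral {\<tau>..\<tau>+h} w')"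
    have ev: "norm (Y \<tau> - w \<tau>) \<le> \<eta>" "norm (Z \<tau> - w' \<tau>) \<le> \<eta>" if "\<tau> \<in> {s..t}" for \<tau>
      using d1(2)[OF h(1,2)] d2(2)[OF h(1,3)] that st h(4)
      unfolding Y_def Z_def by auto
    have hF: "((\<lambda>\<tau>. inner (f (Y \<tau>)) (Z \<tau>)) has_integral (F (Y t) - F (Y s))) {s..t}"
      unfolding Y_def Z_def by (rule F_h[OF st(1,2) h(1,4) cw der F_deriv])
    have tS: "t \<in> {s..t}" "s \<in> {s..t}" using st by auto
    have "\<bar>F (Y t) - F (w t)\<bar> < e" using dt(2)[of "Y t"] ev(1)[OF tS(1)] \<eta> by simp
    moreover have "\<bar>F (Y s) - F (w s)\<bar> < e" using ds(2)[of "Y s"] ev(1)[OF tS(2)] \<eta> by simp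
    moreover have "\<bar>(F (Y t) - F (Y s)) - R\<bar> \<le> (t - s) * (Bf + Bw' + 1) * e"
    proof -
      have "((\<lambda>\<tau>. inner (f (Y \<tau>)) (Z \<tau>) - inner (f (w \<tau>)) (w' \<tau>)) has_integral ((F (Y t) - F (Y s)) - R)) {s..t}"
        by (rule has_integral_diff[OF hF hR])
      hence "norm ((F (Y t) - F (Y s)) - R) \<le> ((Bf + Bw' + 1) * e) * content (cbox s t)"
      proof (intro has_integral_bound[where f="\<lambda>\<tau>. inner (f (Y \<tau>)) (Z \<tau>) - inner (f (w \<tau>)) (w' \<tau>)"])
        show "0 \<le> (Bf + Bw' + 1) * e" using Bf Bw' e by simp
      next
        fix x assume x: "x \<in> cbox s t"
        hence x': "x \<in> {s..t}" "x \<in> {a..b}" using st by auto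
        have nw: "norm (w x) \<le> Bw + 1" using Bw(2)[OF x'(2)] by simp
        have nY: "norm (Y x) \<le> Bw + 1"
          using Bw(2)[OF x'(2)] ev(1)[OF x'(1)] norm_triangle_ineq2[of "Y x" "w x"] \<eta> by simp
        have "norm (f (Y x) - f (w x)) \<le> L * norm (Y x - w x)" by (rule Lip[OF nY nw])
        also have "\<dots> \<le> L * \<eta>" using ev(1)[OF x'(1)] Lp by (intro mult_left_mono) auto
        also have "\<dots> \<le> e" by (rule \<eta>(4))
        finally have c1: "norm (f (Y x) - f (w x)) \<le> e" .
        have c2: "norm (Z x - w' x) \<le> e" using ev(2)[OF x'(1)] \<eta> by simp
        show "norm (inner (f (Y x)) (Z x) - inner (f (w x)) (w' x)) \<le> (Bf + Bw' + 1) * e"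
          using inner_close[OF Bf(2)[OF x'(2)] Bw'(2)[OF x'(2)] c1 c2 e(2)] by simp
      qed simp
      thus ?thesis using st by (simp add: mult_ac)
    qed
    ultimately have "\<bar>Lf - R\<bar> \<le> 2 * e + (t - s) * (Bf + Bw' + 1) * e" unfolding Lf_def by linarith
    thus "\<bar>Lf - R\<bar> \<le> C * e" unfolding C_def by (simp add: algebra_simps)
  qed
  thus ?thesis using hR unfolding Lf_def by simp
qed




lemma adj_norm:
  assumes "Bstar_of B Bs"
  shows "norm (blinfun_apply Bs y) \<le> norm B * norm y"
proof -
  have "(norm (Bs y))\<^sup>2 = inner (Bs y) (Bs y)" by (simp add: power2_norm_eq_inner)
  also have "\<dots> = inner (B (Bs y)) y" using assms unfolding Bstar_of_def by simp
  also have "\<dots> \<le> norm (B (Bs y)) * norm y" by (rule norm_cauchy_schwarz)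
  also have "\<dots> \<le> norm B * norm (Bs y) * norm y" by (intro mult_right_mono norm_blinfun) simp
  finally have *: "norm (Bs y) * norm (Bs y) \<le> (norm B * norm y) * norm (Bs y)"
    by (simp add: power2_eq_square mult_ac)
  show ?thesis
  proof (cases "Bs y = 0")
    case False
    then show ?thesis using mult_right_le_imp_le[OF *] by simp
  qed simp
qed

lemma adj_diff:
  assumes "Bstar_of B1 Bs1" "Bstar_of B2 Bs2"
  shows "Bstar_of (B1 - B2) (Bs1 - Bs2)"
  using assms unfolding Bstar_of_def by (simp add: blinfun.diff_left inner_diff_left inner_diff_right)

lemma adj_cont:
  fixes P :: "real \<Rightarrow> ('p::real_inner \<Rightarrow>\<^sub>L 'h::real_inner)"
  assumes "continuous_on S P" "\<And>\<sigma>. Bstar_of (P \<sigma>) (Ps \<sigma>)"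
  shows "continuous_on S Ps"
  unfolding continuous_on_iff
proof (intro ballI allI impI)
  fix x e assume x: "x \<in> S" and e: "(e::real) > 0"
  obtain d where d: "d > 0" "\<And>x'. x' \<in> S \<Longrightarrow> dist x' x < d \<Longrightarrow> dist (P x') (P x) < e"
    using assms(1) x e unfolding continuous_on_iff by meson
  show "\<exists>d>0. \<forall>x'\<in>S. dist x' x < d \<longrightarrow> dist (Ps x') (Ps x) < e"
  proof (intro exI[of _ d] conjI ballI impI)
    fix x' assume x': "x' \<in> S" "dist x' x < d"
    have "norm (Ps x' - Ps x) \<le> norm (P x' - P x)"
    proof (rule norm_blinfun_bound)
      fix y
      have "Bstar_of (P x' - P x) (Ps x' - Ps x)" by (rule adj_diff[OF assms(2) assms(2)])
      thus "norm ((Ps x' - Ps x) y) \<le> norm (P x' - P x) * norm y" by (rule adj_norm)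
    qed simp
    thus "dist (Ps x') (Ps x) < e" using d(2)[OF x'] by (simp add: dist_norm)
  qed (rule d(1))
qed

lemma energy_piece:
  fixes \<iota> :: "'v::{real_inner,complete_space} \<Rightarrow>\<^sub>L 'h::{real_inner,complete_space}"
    and P :: "real \<Rightarrow> ('p::real_inner \<Rightarrow>\<^sub>L 'h)" and Ps :: "real \<Rightarrow> ('h \<Rightarrow>\<^sub>L 'p)"
    and u :: "real \<Rightarrow> 'v" and u' :: "real \<Rightarrow> 'h" and f :: "'v \<Rightarrow> 'h" and F :: "'v \<Rightarrow> real"
    and D :: "real \<Rightarrow> 'h \<Rightarrow> 'h"
  assumes st: "0 \<le> a" "a \<le> s" "s \<le> t" "t < b"
    and usol: "weak_sol \<iota> f D 0 b u u'"
    and Dform: "\<And>\<sigma> x. \<sigma> \<in> {a..b} \<Longrightarrow> D \<sigma> x = c *\<^sub>R P \<sigma> (Ps \<sigma> x)"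
    and adj: "\<And>\<sigma>. Bstar_of (P \<sigma>) (Ps \<sigma>)"
    and cP: "continuous_on {a..b} P"
    and F_deriv: "\<And>x. (F has_derivative (\<lambda>v. inner (f x) (\<iota> v))) (at x)"
    and lip: "\<And>R. \<exists>L. \<forall>x y. norm x \<le> R \<longrightarrow> norm y \<le> R \<longrightarrow> norm (f x - f y) \<le> L * norm (x - y)"
  shows "((\<lambda>\<sigma>. - c * (norm (Ps \<sigma> (u' \<sigma>)))\<^sup>2) has_integral (energy F u u' t - energy F u u' s)) {s..t}"
proof -
  have sub: "{a..b} \<subseteq> {0..b}" using st by auto
  note W = usol[unfolded weak_sol_def]
  note ws1 = W[THEN conjunct2, THEN conjunct1]
  note ws2 = W[THEN conjunct2, THEN conjunct2, THEN conjunct1]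
  note ws3 = W[THEN conjunct2, THEN conjunct2, THEN conjunct2, THEN conjunct1]
  note ws4 = W[THEN conjunct2, THEN conjunct2, THEN conjunct2, THEN conjunct2]
  have cu: "continuous_on {a..b} u" by (rule continuous_on_subset[OF ws1 sub])
  have cu': "continuous_on {a..b} u'" by (rule continuous_on_subset[OF ws2 sub])
  have der: "((\<lambda>\<sigma>. \<iota> (u \<sigma>)) has_vector_derivative u' \<tau>) (at \<tau> within {a..b})" if "\<tau> \<in> {a..b}" for \<tau>
  proof -
    have "\<tau> \<in> {0..b}" using that sub by blast
    thus ?thesis using ws3 has_vector_derivative_within_subset[OF _ sub] by blast
  qed
  have cPs: "continuous_on {a..b} Ps" by (rule adj_cont[OF cP adj])
  have fc: "\<And>x. isCont f x" by (rule loclip_isCont[OF lip])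
  have cfu: "continuous_on {a..b} (\<lambda>\<sigma>. f (u \<sigma>))"
    using continuous_on_compose2[OF continuous_at_imp_continuous_on[of UNIV f] cu] fc by auto
  define k where "k \<sigma> = - (c *\<^sub>R P \<sigma> (Ps \<sigma> (u' \<sigma>))) + f (u \<sigma>)" for \<sigma>
  have ck: "continuous_on {a..b} k"
  proof -
    have c1: "continuous_on {a..b} (\<lambda>\<sigma>. P \<sigma> (Ps \<sigma> (u' \<sigma>)))"
      by (rule blinfun.continuous_on[OF cP blinfun.continuous_on[OF cPs cu']])
    show ?thesis unfolding k_def
      by (rule continuous_on_add[OF continuous_on_minus[OF continuous_on_scaleR[OF continuous_on_const c1]] cfu])
  qed
  have weak: "((\<lambda>\<sigma>. - inner (u \<sigma>) v + inner (k \<sigma>) (\<iota> v)) has_integral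
          (inner (u' s2) (\<iota> v) - inner (u' s1) (\<iota> v))) {s1..s2}"
    if "a \<le> s1" "s1 \<le> s2" "s2 \<le> b" for v s1 s2
  proof -
    have h0: "((\<lambda>\<tau>. - inner (u \<tau>) v - inner (D \<tau> (u' \<tau>)) (\<iota> v) + inner (f (u \<tau>)) (\<iota> v)) has_integral
          (inner (u' s2) (\<iota> v) - inner (u' s1) (\<iota> v))) {s1..s2}"
      using ws4[rule_format, of s1 s2 v] that st by simp
    moreover have eqf: "\<And>\<tau>. \<tau> \<in> {s1..s2} \<Longrightarrow> - inner (u \<tau>) v - inner (D \<tau> (u' \<tau>)) (\<iota> v) + inner (f (u \<tau>)) (\<iota> v)
        = - inner (u \<tau>) v + inner (k \<tau>) (\<iota> v)"
      using that Dform unfolding k_def by (simp add: inner_add_left inner_diff_left)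
    show ?thesis by (rule iffD1[OF has_integral_cong[OF eqf] h0])
  qed
  have h1: "((\<lambda>\<sigma>. inner (k \<sigma>) (u' \<sigma>)) has_integral
      ((1/2) * ((norm (u t))\<^sup>2 + (norm (u' t))\<^sup>2) - (1/2) * ((norm (u s))\<^sup>2 + (norm (u' s))\<^sup>2))) {s..t}"
    by (rule kin_core[OF st(2-4) cu cu' ck der weak])
  have h2: "((\<lambda>\<sigma>. inner (f (u \<sigma>)) (u' \<sigma>)) has_integral (F (u t) - F (u s))) {s..t}"
    by (rule F_core[OF st(2-4) cu cu' der F_deriv lip])
  have "((\<lambda>\<sigma>. inner (k \<sigma>) (u' \<sigma>) - inner (f (u \<sigma>)) (u' \<sigma>)) has_integral (energy F u u' t - energy F u u' s)) {s..t}"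
    using has_integral_diff[OF h1 h2] unfolding energy_def by (simp add: algebra_simps)
  moreover have "inner (k \<sigma>) (u' \<sigma>) - inner (f (u \<sigma>)) (u' \<sigma>) = - c * (norm (Ps \<sigma> (u' \<sigma>)))\<^sup>2" for \<sigma>
  proof -
    have "inner (P \<sigma> (Ps \<sigma> (u' \<sigma>))) (u' \<sigma>) = inner (Ps \<sigma> (u' \<sigma>)) (Ps \<sigma> (u' \<sigma>))"
      using adj unfolding Bstar_of_def by blast
    thus ?thesis unfolding k_def by (simp add: inner_add_left inner_diff_left power2_norm_eq_inner)
  qed
  ultimately show ?thesis by simp
qed




lemma even_step:
  fixes E g :: "real \<Rightarrow> real"
  assumes ab: "a < b" and cE: "continuous_on {a..b} E"
    and hi: "\<And>c. a \<le> c \<Longrightarrow> c < b \<Longrightarrow> (g has_integral (E a - E c)) {a..c}"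
    and gnn: "\<And>\<sigma>. 0 \<le> g \<sigma>" and Enn: "\<And>\<tau>. 0 \<le> E \<tau>"
    and obs: "E b \<le> d * integral {a..b} g" and d: "d > 0"
  shows "E b \<le> d / (d + 1) * E a" "\<And>\<tau>. \<tau> \<in> {a..b} \<Longrightarrow> E \<tau> \<le> E a"
proof -
  have lt: "E c \<le> E a" if "a \<le> c" "c < b" for c
    using has_integral_nonneg[OF hi[OF that] gnn] by simp
  show mono: "E \<tau> \<le> E a" if "\<tau> \<in> {a..b}" for \<tau>
  proof (cases "\<tau> < b")
    case True then show ?thesis using lt that by auto
  next
    case False
    hence "\<tau> = b" using that by auto
    moreover have "E b \<le> (\<lambda>_. E a) b"
      by (rule cont_left_le[OF ab cE continuous_on_const]) (use lt in auto)
    ultimately show ?thesis by simp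
  qed
  show "E b \<le> d / (d + 1) * E a"
  proof (cases "g integrable_on {a..b}")
    case True
    have cI: "continuous_on {a..b} (\<lambda>c. integral {a..c} g)" by (rule indefinite_integral_continuous_1[OF True])
    have eqc: "E c = E a - integral {a..c} g" if "a \<le> c" "c < b" for c
      using integral_unique[OF hi[OF that]] by simp
    have c2: "continuous_on {a..b} (\<lambda>c. E a - integral {a..c} g)"
      by (intro continuous_on_diff continuous_on_const cI)
    have "E b \<le> (\<lambda>c. E a - integral {a..c} g) b"
    proof (rule cont_left_le[OF ab cE c2])
      fix c assume "a \<le> c" "c < b"
      thus "E c \<le> E a - integral {a..c} g" using eqc[of c] by linarith
    qed
    moreover have "(\<lambda>c. E a - integral {a..c} g) b \<le> E b"
    proof (rule cont_left_le[OF ab c2 cE])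
      fix c assume "a \<le> c" "c < b"
      thus "E a - integral {a..c} g \<le> E c" using eqc[of c] by linarith
    qed
    ultimately have Eb: "E b = E a - integral {a..b} g" by simp
    have "E b \<le> d * (E a - E b)" using obs Eb by simp
    hence "E b * (d + 1) \<le> d * E a" by (simp add: algebra_simps)
    thus ?thesis using d by (simp add: field_simps)
  next
    case False
    hence "E b \<le> 0" using obs not_integrable_integral[OF False] by simp
    moreover have "0 \<le> d / (d + 1) * E a" using d Enn[of a] by simp
    ultimately show ?thesis by linarith
  qed
qed

lemma odd_step:
  fixes E g :: "real \<Rightarrow> real"
  assumes ab: "a < b" and cE: "continuous_on {a..b} E"
    and hi: "\<And>c. a \<le> c \<Longrightarrow> c < b \<Longrightarrow> (g has_integral (E c - E a)) {a..c}"
    and gnn: "\<And>\<sigma>. 0 \<le> g \<sigma>"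
    and cg: "\<And>c. a \<le> c \<Longrightarrow> c < b \<Longrightarrow> continuous_on {a..c} g"
    and gle: "\<And>\<sigma>. a \<le> \<sigma> \<Longrightarrow> \<sigma> < b \<Longrightarrow> g \<sigma> \<le> lam * E \<sigma>"
  shows "E b \<le> exp (lam * (b - a)) * E a" "\<And>\<tau>. \<tau> \<in> {a..b} \<Longrightarrow> E \<tau> \<le> E b"
proof -
  have mono: "E \<tau> \<le> E c" if "a \<le> \<tau>" "\<tau> \<le> c" "c < b" for \<tau> c
    using has_integral_subset_le[of "{a..\<tau>}" "{a..c}" g, OF _ hi hi] that gnn by auto
  show "E \<tau> \<le> E b" if \<tau>: "\<tau> \<in> {a..b}" for \<tau>
  proof (cases "\<tau> < b")
    case True
    have cE': "continuous_on {\<tau>..b} E" using cE \<tau> by (auto intro: continuous_on_subset)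
    have "(\<lambda>_. E \<tau>) b \<le> E b"
      by (rule cont_left_le[OF True continuous_on_const cE']) (use mono \<tau> in auto)
    thus ?thesis by simp
  qed (use \<tau> in auto)
  have gron: "E c \<le> exp (lam * (c - a)) * E a" if c: "a \<le> c" "c < b" for c
  proof -
    define \<phi> where "\<phi> \<tau> = exp (- lam * \<tau>) * E \<tau>" for \<tau>
    define \<phi>' where "\<phi>' \<tau> = exp (- lam * \<tau>) * (g \<tau> - lam * E \<tau>)" for \<tau>
    have Eeq: "E \<tau> = E a + integral {a..\<tau>} g" if "\<tau> \<in> {a..c}" for \<tau>
    proof -
      have "a \<le> \<tau>" "\<tau> < b" using that c by auto
      from integral_unique[OF hi[OF this]] show ?thesis by simp
    qed
    have dE: "(E has_vector_derivative g \<tau>) (at \<tau> within {a..c})" if "\<tau> \<in> {a..c}" for \<tau>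
    proof -
      have "((\<lambda>u. E a + integral {a..u} g) has_vector_derivative g \<tau>) (at \<tau> within {a..c})"
        using has_vector_derivative_add[OF has_vector_derivative_const integral_has_vector_derivative[OF cg[OF c] that]]
        by simp
      thus ?thesis
      proof (rule has_vector_derivative_transform_within[OF _ zero_less_one that])
        fix x' assume "x' \<in> {a..c}" "dist x' \<tau> < 1"
        from Eeq[OF this(1)] show "E a + integral {a..x'} g = E x'" by linarith
      qed
    qed
    have "(\<phi>' has_integral (\<phi> c - \<phi> a)) {a..c}"
    proof (rule fundamental_theorem_of_calculus[OF c(1)])
      fix x assume x: "x \<in> {a..c}"
      have "(E has_real_derivative g x) (at x within {a..c})"
        using dE[OF x] by (simp add: has_real_derivative_iff_has_vector_derivative)
      hence "(\<phi> has_real_derivative (exp (- lam * x) * (- lam) * E x + exp (- lam * x) * g x)) (at x within {a..c})"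
        unfolding \<phi>_def by (auto intro!: derivative_eq_intros)
      thus "(\<phi> has_vector_derivative \<phi>' x) (at x within {a..c})"
        unfolding \<phi>'_def has_real_derivative_iff_has_vector_derivative[symmetric] by (simp add: algebra_simps)
    qed
    moreover have np: "\<phi>' x \<le> 0" if "x \<in> {a..c}" for x
    proof -
      have "g x - lam * E x \<le> 0" using gle[of x] that c by simp
      thus ?thesis unfolding \<phi>'_def by (simp add: mult_nonneg_nonpos)
    qed
    ultimately have "((\<lambda>x. - \<phi>' x) has_integral - (\<phi> c - \<phi> a)) {a..c}" using has_integral_neg by blast
    hence "0 \<le> - (\<phi> c - \<phi> a)" by (rule has_integral_nonneg) (use np in force)
    hence "\<phi> c - \<phi> a \<le> 0" by simp
    hence "exp (- lam * c) * E c \<le> exp (- lam * a) * E a" unfolding \<phi>_def by simp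
    hence m: "exp (lam * c) * (exp (- lam * c) * E c) \<le> exp (lam * c) * (exp (- lam * a) * E a)"
      by (intro mult_left_mono) auto
    have e1: "exp (lam * c) * (exp (- lam * c) * E c) = E c"
      by (simp add: mult.assoc[symmetric] exp_add[symmetric])
    have e2: "exp (lam * c) * (exp (- lam * a) * E a) = exp (lam * (c - a)) * E a"
      by (simp add: mult.assoc[symmetric] exp_add[symmetric] right_diff_distrib)
    show ?thesis using m unfolding e1 e2 .
  qed
  have c2: "continuous_on {a..b} (\<lambda>c. exp (lam * (c - a)) * E a)"
    by (intro continuous_intros)
  have "E b \<le> (\<lambda>c. exp (lam * (c - a)) * E a) b"
  proof (rule cont_left_le[OF ab cE c2])
    fix c assume "a \<le> c" "c < b"
    from gron[OF this] show "E c \<le> exp (lam * (c - a)) * E a" .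
  qed
  thus "E b \<le> exp (lam * (b - a)) * E a" by simp
qed




lemma prod_to_zero:
  fixes P x :: "nat \<Rightarrow> real"
  assumes Pnn: "\<And>n. 0 \<le> P n" and step: "\<And>n. P (Suc n) \<le> exp (x n) * P n"
    and S: "filterlim (\<lambda>N. \<Sum>n<N. x n) at_bot sequentially"
  shows "P \<longlonglongrightarrow> 0"
proof -
  have bnd: "P N \<le> exp (\<Sum>n<N. x n) * P 0" for N
  proof (induction N)
    case 0 then show ?case by simp
  next
    case (Suc N)
    have "P (Suc N) \<le> exp (x N) * P N" by (rule step)
    also have "\<dots> \<le> exp (x N) * (exp (\<Sum>n<N. x n) * P 0)" using Suc by (intro mult_left_mono) auto
    also have "\<dots> = exp (\<Sum>n<Suc N. x n) * P 0" by (simp add: exp_add mult_ac)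
    finally show ?case .
  qed
  have "((\<lambda>N. exp (\<Sum>n<N. x n)) \<longlongrightarrow> 0) sequentially"
    using filterlim_compose[OF exp_at_bot S] by (simp add: o_def)
  hence "((\<lambda>N. exp (\<Sum>n<N. x n) * P 0) \<longlongrightarrow> 0 * P 0) sequentially"
    by (intro tendsto_mult tendsto_const)
  hence u: "((\<lambda>N. exp (\<Sum>n<N. x n) * P 0) \<longlongrightarrow> 0) sequentially" by simp
  show ?thesis
    by (rule tendsto_sandwich[OF _ _ tendsto_const u]) (auto intro!: always_eventually Pnn bnd)
qed

lemma final_limit:
  fixes E :: "real \<Rightarrow> real" and t :: "nat \<Rightarrow> real"
  assumes t0: "t 0 = 0" and tm: "strict_mono t" and ti: "filterlim t at_top sequentially"
    and Enn: "\<And>\<tau>. 0 \<le> E \<tau>"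
    and P0: "(\<lambda>n. E (t (2*n))) \<longlonglongrightarrow> 0"
    and ev: "\<And>n \<tau>. t (2*n) \<le> \<tau> \<Longrightarrow> \<tau> \<le> t (2*n+1) \<Longrightarrow> E \<tau> \<le> E (t (2*n))"
    and od: "\<And>n \<tau>. t (2*n+1) \<le> \<tau> \<Longrightarrow> \<tau> \<le> t (2*n+2) \<Longrightarrow> E \<tau> \<le> E (t (2*(n+1)))"
  shows "(E \<longlongrightarrow> 0) at_top"
proof -
  have tnn: "0 \<le> t n" for n using t0 tm by (metis le0 strict_mono_less_eq)
  have loc: "\<exists>k. t k \<le> \<tau> \<and> \<tau> < t (Suc k)" if "0 \<le> \<tau>" for \<tau>
  proof -
    have "eventually (\<lambda>n. \<tau> < t n) sequentially"
      using ti by (simp add: filterlim_at_top_dense)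
    then obtain K where K: "\<tau> < t K" by (auto simp: eventually_sequentially)
    define K0 where "K0 = (LEAST K. \<tau> < t K)"
    have K0: "\<tau> < t K0" unfolding K0_def by (rule LeastI[of _ K]) (rule K)
    have "K0 \<noteq> 0"
    proof
      assume "K0 = 0"
      thus False using K0 t0 that by simp
    qed
    then obtain k where k: "K0 = Suc k" by (cases K0) auto
    have "\<not> \<tau> < t k" using not_less_Least[of k "\<lambda>K. \<tau> < t K"] k unfolding K0_def by simp
    thus ?thesis using K0 k by (intro exI[of _ k]) simp
  qed
  show ?thesis
    unfolding tendsto_iff
  proof (intro allI impI)
    fix e :: real assume e: "e > 0"
    obtain N where N: "\<And>n. n \<ge> N \<Longrightarrow> E (t (2*n)) < e"
      using P0 e unfolding LIMSEQ_def by (auto simp: dist_real_def) (metis Enn abs_of_nonneg)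
    have "E \<tau> < e" if \<tau>: "\<tau> \<ge> t (2*N)" for \<tau>
    proof -
      obtain k where k: "t k \<le> \<tau>" "\<tau> < t (Suc k)" using loc[of \<tau>] \<tau> tnn[of "2*N"] by auto
      have "2*N < Suc k"
      proof (rule ccontr)
        assume "\<not> 2*N < Suc k"
        hence "t (Suc k) \<le> t (2*N)" using tm by (simp add: strict_mono_less_eq)
        thus False using k \<tau> by simp
      qed
      show ?thesis
      proof (cases "even k")
        case True
        then obtain n where n: "k = 2*n" by blast
        hence "n \<ge> N" using \<open>2*N < Suc k\<close> by simp
        have "E \<tau> \<le> E (t (2*n))" using ev[of n \<tau>] k n by simp
        also have "\<dots> < e" using N \<open>n \<ge> N\<close> by simp
        finally show ?thesis .
      next
        case False
        then obtain n where n: "k = 2*n+1" using oddE by blast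
        hence "n + 1 \<ge> N" using \<open>2*N < Suc k\<close> by simp
        have "E \<tau> \<le> E (t (2*(n+1)))" using od[of n \<tau>] k n by simp
        also have "\<dots> < e" using N \<open>n + 1 \<ge> N\<close> by blast
        finally show ?thesis .
      qed
    qed
    thus "eventually (\<lambda>\<tau>. dist (E \<tau>) 0 < e) at_top"
      unfolding eventually_at_top_linorder using Enn by (auto simp: dist_real_def)
  qed
qed




lemma weak_sol_restrict:
  assumes usol: "weak_sol \<iota> f D 0 b u u'" and ab: "0 \<le> a" "a \<le> b"
    and DD: "\<And>\<sigma> x. \<sigma> \<in> {a..<b} \<Longrightarrow> D' \<sigma> x = D \<sigma> x"
  shows "weak_sol \<iota> f D' a b u u'"
proof -
  note W = usol[unfolded weak_sol_def]
  note ws1 = W[THEN conjunct2, THEN conjunct1]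
  note ws2 = W[THEN conjunct2, THEN conjunct2, THEN conjunct1]
  note ws3 = W[THEN conjunct2, THEN conjunct2, THEN conjunct2, THEN conjunct1]
  note ws4 = W[THEN conjunct2, THEN conjunct2, THEN conjunct2, THEN conjunct2]
  have sub: "{a..b} \<subseteq> {0..b}" using ab by auto
  have c1: "continuous_on {a..b} u" by (rule continuous_on_subset[OF ws1 sub])
  have c2: "continuous_on {a..b} u'" by (rule continuous_on_subset[OF ws2 sub])
  have c3: "\<forall>\<tau>\<in>{a..b}. ((\<lambda>s. blinfun_apply \<iota> (u s)) has_vector_derivative u' \<tau>) (at \<tau> within {a..b})"
  proof
    fix \<tau> assume "\<tau> \<in> {a..b}"
    hence "\<tau> \<in> {0..b}" using sub by blast
    thus "((\<lambda>s. blinfun_apply \<iota> (u s)) has_vector_derivative u' \<tau>) (at \<tau> within {a..b})"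
      using ws3 has_vector_derivative_within_subset[OF _ sub] by blast
  qed
  have c4: "\<forall>v s t. a \<le> s \<longrightarrow> s \<le> t \<longrightarrow> t \<le> b \<longrightarrow>
        ((\<lambda>\<tau>. - inner (u \<tau>) v - inner (D' \<tau> (u' \<tau>)) (blinfun_apply \<iota> v)
               + inner (f (u \<tau>)) (blinfun_apply \<iota> v))
          has_integral (inner (u' t) (blinfun_apply \<iota> v) - inner (u' s) (blinfun_apply \<iota> v))) {s..t}"
  proof (intro allI impI)
    fix v s t assume st: "a \<le> s" "s \<le> t" "t \<le> b"
    have h0: "((\<lambda>\<tau>. - inner (u \<tau>) v - inner (D \<tau> (u' \<tau>)) (blinfun_apply \<iota> v)
               + inner (f (u \<tau>)) (blinfun_apply \<iota> v))
          has_integral (inner (u' t) (blinfun_apply \<iota> v) - inner (u' s) (blinfun_apply \<iota> v))) {s..t}"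
      using ws4[rule_format, of s t v] st ab by simp
    show "((\<lambda>\<tau>. - inner (u \<tau>) v - inner (D' \<tau> (u' \<tau>)) (blinfun_apply \<iota> v)
               + inner (f (u \<tau>)) (blinfun_apply \<iota> v))
          has_integral (inner (u' t) (blinfun_apply \<iota> v) - inner (u' s) (blinfun_apply \<iota> v))) {s..t}"
    proof (rule has_integral_spike_finite[OF _ _ h0])
      show "finite {b}" by simp
      fix \<tau> assume "\<tau> \<in> {s..t} - {b}"
      hence "\<tau> \<in> {a..<b}" using st by auto
      thus "- inner (u \<tau>) v - inner (D' \<tau> (u' \<tau>)) (blinfun_apply \<iota> v) + inner (f (u \<tau>)) (blinfun_apply \<iota> v) =
            - inner (u \<tau>) v - inner (D \<tau> (u' \<tau>)) (blinfun_apply \<iota> v) + inner (f (u \<tau>)) (blinfun_apply \<iota> v)"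
        using DD by simp
    qed
  qed
  show ?thesis unfolding weak_sol_def using ab c1 c2 c3 c4 by blast
qed

lemma cont_from_G:
  fixes B :: "real \<Rightarrow> 'a::real_normed_vector"
  assumes "\<forall>s\<in>{a..<b}. G s = B s" "continuous_on {a..b} G" "a \<le> c" "c < b"
  shows "continuous_on {a..c} B"
proof -
  have "continuous_on {a..c} G" using assms(2-4) by (auto intro: continuous_on_subset)
  thus ?thesis by (rule continuous_on_eq) (use assms(1,4) in auto)
qed

lemma cont_from_deriv:
  assumes "\<forall>s\<in>{a..b}. (G has_vector_derivative G' s) (at s within {a..b})"
  shows "continuous_on {a..b} G"
  using assms has_vector_derivative_continuous continuous_on_eq_continuous_within by blast




lemma half_bound:
  fixes a b f :: real
  assumes "0 \<le> a" "f \<le> 0"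
  shows "b \<le> 2 * (1/2 * (a + b) - f)"
proof -
  have "2 * (1/2 * (a + b) - f) = a + b - 2 * f" by (simp add: algebra_simps)
  thus ?thesis using assms by linarith
qed

lemma half_nonneg:
  fixes X f :: real
  assumes "0 \<le> X" "f \<le> 0"
  shows "0 \<le> 1/2 * X - f"
  using assms by linarith

theorem theorem4p3:
  fixes \<iota> :: "'v::{real_inner,complete_space} \<Rightarrow>\<^sub>L 'h::{real_inner,complete_space}"
    and B1 :: "real \<Rightarrow> ('u1::{real_inner,complete_space} \<Rightarrow>\<^sub>L 'h)"
    and B1s :: "real \<Rightarrow> ('h \<Rightarrow>\<^sub>L 'u1)"
    and B3 :: "real \<Rightarrow> ('u3::{real_inner,complete_space} \<Rightarrow>\<^sub>L 'h)"
    and B3s :: "real \<Rightarrow> ('h \<Rightarrow>\<^sub>L 'u3)"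
    and j1 :: "'h \<Rightarrow>\<^sub>L 'w1::{real_inner,complete_space}"
    and j3 :: "'h \<Rightarrow>\<^sub>L 'w3::{real_inner,complete_space}"
    and C1 C3 :: real
    and f :: "'v \<Rightarrow> 'h" and F :: "'v \<Rightarrow> real"
    and t :: "nat \<Rightarrow> real"
    and m M :: "nat \<Rightarrow> real"
    and Tbar d :: "nat \<Rightarrow> real"
    and u :: "real \<Rightarrow> 'v" and u' :: "real \<Rightarrow> 'h"
  assumes \<iota>_inj: "inj (blinfun_apply \<iota>)"
    and \<iota>_dense: "closure (range (blinfun_apply \<iota>)) = UNIV"
    and t0: "t 0 = 0" and t_mono: "strict_mono t"
    and t_inf: "filterlim t at_top sequentially"
    and B1s_adj: "\<And>s. Bstar_of (B1 s) (B1s s)"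
    and B3s_adj: "\<And>s. Bstar_of (B3 s) (B3s s)"
    and B3_zero: "\<And>n s. s \<in> {t (2*n)..<t (2*n+1)} \<Longrightarrow> B3 s = 0"
    and B1_zero: "\<And>n s. s \<in> {t (2*n+1)..<t (2*n+2)} \<Longrightarrow> B1 s = 0"
    and B1_C1: "\<And>n. \<exists>G G'. (\<forall>s\<in>{t (2*n)..<t (2*n+1)}. G s = B1 s) \<and>
                   continuous_on {t (2*n)..t (2*n+1)} G' \<and>
                   (\<forall>s\<in>{t (2*n)..t (2*n+1)}.
                      (G has_vector_derivative G' s) (at s within {t (2*n)..t (2*n+1)}))"
    and B3_C: "\<And>n. \<exists>G. (\<forall>s\<in>{t (2*n+1)..<t (2*n+2)}. G s = B3 s) \<and>
                   continuous_on {t (2*n+1)..t (2*n+2)} G"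
    and j1_inj: "inj (blinfun_apply j1)" and j3_inj: "inj (blinfun_apply j3)"
    and W1_emb: "\<And>x. (norm (j1 x))\<^sup>2 \<le> C1 * (norm x)\<^sup>2"
    and W3_emb: "\<And>x. (norm (j3 x))\<^sup>2 \<le> C3 * (norm x)\<^sup>2"
    and f_loclip: "\<And>R. \<exists>L. \<forall>x y. norm x \<le> R \<longrightarrow> norm y \<le> R \<longrightarrow>
                        norm (f x - f y) \<le> L * norm (x - y)"
    and F0: "F 0 = 0"
    and F_deriv: "\<And>x. (F has_derivative (\<lambda>v. inner (f x) (blinfun_apply \<iota> v))) (at x)"
    and NL1: "\<And>x. F x \<le> 0" "\<And>x. inner (f x) (blinfun_apply \<iota> x) \<le> 0"
    and cond_j: "\<And>n. 0 < m (2*n) \<and> m (2*n) \<le> M (2*n)"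
        "\<And>n s x. s \<in> {t (2*n)..<t (2*n+1)} \<Longrightarrow>
            m (2*n) * (norm (j1 x))\<^sup>2 \<le> (norm (B1s s x))\<^sup>2 \<and>
            (norm (B1s s x))\<^sup>2 \<le> M (2*n) * (norm (j1 x))\<^sup>2"
    and cond_jj: "\<And>n. 0 < M (2*n+1)"
        "\<And>n s x. s \<in> {t (2*n+1)..<t (2*n+2)} \<Longrightarrow>
            (norm (B3s s x))\<^sup>2 \<le> M (2*n+1) * (norm (j3 x))\<^sup>2"
    and obs_T: "\<And>n. Tbar n < t (2*n+1) - t (2*n)"
    and obs: "\<And>n T. Tbar n < T \<Longrightarrow> T \<le> t (2*n+1) - t (2*n) \<Longrightarrow>
        \<exists>dn>0. \<forall>w w'. weak_sol \<iota> f (\<lambda>s x. B1 s (B1s s x)) (t (2*n)) (t (2*n+1)) w w' \<longrightarrow>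
           energy F w w' (t (2*n) + T)
             \<le> dn * integral {t (2*n)..t (2*n) + T} (\<lambda>s. (norm (B1s s (w' s)))\<^sup>2)"
    and d_pos: "\<And>n. 0 < d n"
    and d_obs: "\<And>n w w'. weak_sol \<iota> f (\<lambda>s x. B1 s (B1s s x)) (t (2*n)) (t (2*n+1)) w w' \<Longrightarrow>
           energy F w w' (t (2*n+1))
             \<le> d n * integral {t (2*n)..t (2*n+1)} (\<lambda>s. (norm (B1s s (w' s)))\<^sup>2)"
    and sum_cond: "filterlim (\<lambda>N. \<Sum>n<N. 2 * C3 * M (2*n+1) * (t (2*n+2) - t (2*n+1))
                                       + ln (d n / (d n + 1))) at_bot sequentially"
    and u_sol: "\<And>b. 0 \<le> b \<Longrightarrow>
        weak_sol \<iota> f (\<lambda>s x. B1 s (B1s s x) - B3 s (B3s s x)) 0 b u u'"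
  shows "((\<lambda>s. energy F u u' s) \<longlongrightarrow> 0) at_top"
proof -
  define E where "E = energy F u u'"
  have tnn: "0 \<le> t n" for n using t0 t_mono by (metis le0 strict_mono_less_eq)
  have tlt: "t n < t (Suc n)" for n using t_mono by (simp add: strict_mono_def)
  have Enn: "0 \<le> E \<tau>" for \<tau>
  proof -
    have "0 \<le> (norm (u \<tau>))\<^sup>2 + (norm (u' \<tau>))\<^sup>2" by simp
    thus ?thesis unfolding E_def energy_def by (rule half_nonneg[OF _ NL1(1)])
  qed
  have Fc: "isCont F x" for x using has_derivative_continuous[OF F_deriv] by simp
  have Econt: "continuous_on {a..b} E" if "0 \<le> a" for a b
  proof (cases "a \<le> b")
    case True
    note W = u_sol[of b, unfolded weak_sol_def]
    have sub: "{a..b} \<subseteq> {0..b}" using that by auto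
    have cu: "continuous_on {a..b} u" using W True that continuous_on_subset[OF _ sub] by auto
    have cu': "continuous_on {a..b} u'" using W True that continuous_on_subset[OF _ sub] by auto
    have cF: "continuous_on {a..b} (\<lambda>\<tau>. F (u \<tau>))"
      using continuous_on_compose2[OF continuous_at_imp_continuous_on[of UNIV F] cu] Fc by auto
    show ?thesis unfolding E_def energy_def
      by (intro continuous_on_diff continuous_on_mult continuous_on_const continuous_on_add
          continuous_on_power continuous_on_norm cu cu' cF)
  qed simp
  show ?thesis
  proof (cases "\<exists>x0::'h. x0 \<noteq> 0")
    case False
    hence h0: "x = 0" for x :: 'h by blast
    have v0: "x = 0" for x :: 'v
    proof -
      have "\<iota> x = \<iota> 0" using h0 by metis
      thus ?thesis using \<iota>_inj by (simp add: inj_def)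
    qed
    have "(\<lambda>s. energy F u u' s) = (\<lambda>s. 0)"
      by (rule ext) (simp add: energy_def v0[of "u _"] h0[of "u' _"] F0)
    thus ?thesis by simp
  next
    case True
    then obtain x0 :: 'h where x0: "x0 \<noteq> 0" by blast
    have C3nn: "C3 \<ge> 0"
    proof (rule ccontr)
      assume "\<not> C3 \<ge> 0"
      hence "C3 * (norm x0)\<^sup>2 < 0" using x0 by (simp add: mult_neg_pos)
      thus False using W3_emb[of x0] by (smt (verit) zero_le_power2)
    qed
    have even: "E (t (2*n+1)) \<le> d n / (d n + 1) * E (t (2*n))"
      "\<And>\<tau>. \<tau> \<in> {t (2*n)..t (2*n+1)} \<Longrightarrow> E \<tau> \<le> E (t (2*n))" for n
    proof -
      define a where "a = t (2*n)"
      define b where "b = t (2*n+1)"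
      have ab: "a < b" "0 \<le> a" unfolding a_def b_def using tlt[of "2*n"] tnn by auto
      define g where "g \<sigma> = (norm (B1s \<sigma> (u' \<sigma>)))\<^sup>2" for \<sigma>
      obtain G G' where G: "\<forall>s\<in>{a..<b}. G s = B1 s" "continuous_on {a..b} G'"
        "\<forall>s\<in>{a..b}. (G has_vector_derivative G' s) (at s within {a..b})"
        using B1_C1[of n] unfolding a_def b_def by blast
      have cG: "continuous_on {a..b} G" by (rule cont_from_deriv[OF G(3)])
      have hi: "(g has_integral (E a - E c)) {a..c}" if c: "a \<le> c" "c < b" for c
      proof -
        define b' where "b' = (c + b) / 2"
        have b': "c < b'" "b' < b" "0 \<le> b'" using c ab by (auto simp: b'_def)
        have "((\<lambda>\<sigma>. - 1 * (norm (B1s \<sigma> (u' \<sigma>)))\<^sup>2) has_integral (energy F u u' c - energy F u u' a)) {a..c}"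
        proof (rule energy_piece[OF ab(2) order_refl c(1) b'(1) u_sol[OF b'(3)] _ B1s_adj _ F_deriv f_loclip])
          fix \<sigma> and x :: 'h assume "\<sigma> \<in> {a..b'}"
          hence "\<sigma> \<in> {t (2*n)..<t (2*n+1)}" using b' unfolding a_def b_def by auto
          hence "B3 \<sigma> = 0" by (rule B3_zero)
          thus "B1 \<sigma> (B1s \<sigma> x) - B3 \<sigma> (B3s \<sigma> x) = 1 *\<^sub>R B1 \<sigma> (B1s \<sigma> x)" by simp
        next
          show "continuous_on {a..b'} B1" by (rule cont_from_G[OF G(1) cG]) (use b' c in auto)
        qed
        hence "((\<lambda>\<sigma>. - g \<sigma>) has_integral (E c - E a)) {a..c}" unfolding g_def E_def by simp
        from has_integral_neg[OF this] show ?thesis by simp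
      qed
      have ws: "weak_sol \<iota> f (\<lambda>s x. B1 s (B1s s x)) a b u u'"
      proof (rule weak_sol_restrict[OF u_sol[of b] ab(2) less_imp_le[OF ab(1)]])
        fix \<sigma> and x :: 'h assume "\<sigma> \<in> {a..<b}"
        hence "B3 \<sigma> = 0" using B3_zero[of \<sigma> n] unfolding a_def b_def by auto
        thus "B1 \<sigma> (B1s \<sigma> x) = B1 \<sigma> (B1s \<sigma> x) - B3 \<sigma> (B3s \<sigma> x)" by simp
      qed (use ab in auto)
      have obs: "E b \<le> d n * integral {a..b} g"
        using d_obs[of n u u'] ws unfolding a_def b_def E_def g_def by simp
      have gnn: "\<And>\<sigma>. 0 \<le> g \<sigma>" by (simp add: g_def)
      note st = even_step[OF ab(1) Econt[OF ab(2)] hi gnn Enn obs d_pos]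
      show "E (t (2*n+1)) \<le> d n / (d n + 1) * E (t (2*n))" using st(1) unfolding a_def b_def .
      show "E \<tau> \<le> E (t (2*n))" if "\<tau> \<in> {t (2*n)..t (2*n+1)}" for \<tau>
        using st(2)[of \<tau>] that unfolding a_def b_def by simp
    qed
    have odd: "E (t (2*n+2)) \<le> exp (2 * C3 * M (2*n+1) * (t (2*n+2) - t (2*n+1))) * E (t (2*n+1))"
      "\<And>\<tau>. \<tau> \<in> {t (2*n+1)..t (2*n+2)} \<Longrightarrow> E \<tau> \<le> E (t (2*n+2))" for n
    proof -
      define a where "a = t (2*n+1)"
      define b where "b = t (2*n+2)"
      have ab: "a < b" "0 \<le> a" unfolding a_def b_def using tlt[of "2*n+1"] tnn by auto
      define g where "g \<sigma> = (norm (B3s \<sigma> (u' \<sigma>)))\<^sup>2" for \<sigma>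
      obtain G where G: "\<forall>s\<in>{a..<b}. G s = B3 s" "continuous_on {a..b} G"
        using B3_C[of n] unfolding a_def b_def by blast
      have hi: "(g has_integral (E c - E a)) {a..c}" if c: "a \<le> c" "c < b" for c
      proof -
        define b' where "b' = (c + b) / 2"
        have b': "c < b'" "b' < b" "0 \<le> b'" using c ab by (auto simp: b'_def)
        have "((\<lambda>\<sigma>. - (- 1) * (norm (B3s \<sigma> (u' \<sigma>)))\<^sup>2) has_integral (energy F u u' c - energy F u u' a)) {a..c}"
        proof (rule energy_piece[OF ab(2) order_refl c(1) b'(1) u_sol[OF b'(3)] _ B3s_adj _ F_deriv f_loclip])
          fix \<sigma> and x :: 'h assume "\<sigma> \<in> {a..b'}"
          hence "\<sigma> \<in> {t (2*n+1)..<t (2*n+2)}" using b' unfolding a_def b_def by auto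
          hence "B1 \<sigma> = 0" by (rule B1_zero)
          thus "B1 \<sigma> (B1s \<sigma> x) - B3 \<sigma> (B3s \<sigma> x) = (- 1) *\<^sub>R B3 \<sigma> (B3s \<sigma> x)" by simp
        next
          show "continuous_on {a..b'} B3" by (rule cont_from_G[OF G(1) G(2)]) (use b' c in auto)
        qed
        thus ?thesis unfolding g_def E_def by simp
      qed
      have cg: "continuous_on {a..c} g" if c: "a \<le> c" "c < b" for c
      proof -
        have cB: "continuous_on {a..c} B3" by (rule cont_from_G[OF G(1) G(2) c])
        have cBs: "continuous_on {a..c} B3s" by (rule adj_cont[OF cB B3s_adj])
        have "continuous_on {0..b} u'" using u_sol[of b] ab unfolding weak_sol_def by auto
        hence cu': "continuous_on {a..c} u'" by (rule continuous_on_subset) (use ab c in auto)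
        show ?thesis unfolding g_def
          by (intro continuous_on_power continuous_on_norm blinfun.continuous_on[OF cBs cu'])
      qed
      have gle: "g \<sigma> \<le> (2 * C3 * M (2*n+1)) * E \<sigma>" if s: "a \<le> \<sigma>" "\<sigma> < b" for \<sigma>
      proof -
        have "g \<sigma> \<le> M (2*n+1) * (norm (j3 (u' \<sigma>)))\<^sup>2"
          unfolding g_def by (rule cond_jj(2)) (use s in \<open>auto simp: a_def b_def\<close>)
        also have "\<dots> \<le> M (2*n+1) * (C3 * (norm (u' \<sigma>))\<^sup>2)"
          using cond_jj(1)[of n] W3_emb[of "u' \<sigma>"] by (intro mult_left_mono) auto
        also have "\<dots> \<le> M (2*n+1) * (C3 * (2 * E \<sigma>))"
        proof -
          have "(norm (u' \<sigma>))\<^sup>2 \<le> 2 * E \<sigma>"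
            unfolding E_def energy_def by (rule half_bound[OF zero_le_power2 NL1(1)])
          thus ?thesis using cond_jj(1)[of n] C3nn by (intro mult_left_mono) auto
        qed
        finally show ?thesis by (simp add: mult_ac)
      qed
      have gnn: "\<And>\<sigma>. 0 \<le> g \<sigma>" by (simp add: g_def)
      note st = odd_step[OF ab(1) Econt[OF ab(2)] hi gnn cg gle]
      show "E (t (2*n+2)) \<le> exp (2 * C3 * M (2*n+1) * (t (2*n+2) - t (2*n+1))) * E (t (2*n+1))"
        using st(1) unfolding a_def b_def .
      show "E \<tau> \<le> E (t (2*n+2))" if "\<tau> \<in> {t (2*n+1)..t (2*n+2)}" for \<tau>
        using st(2)[of \<tau>] that unfolding a_def b_def by simp
    qed
    define x where "x n = 2 * C3 * M (2*n+1) * (t (2*n+2) - t (2*n+1)) + ln (d n / (d n + 1))" for n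
    have step: "E (t (2 * Suc n)) \<le> exp (x n) * E (t (2*n))" for n
    proof -
      have dh: "0 < d n / (d n + 1)" using d_pos[of n] by simp
      have "E (t (2 * Suc n)) = E (t (2*n+2))" by simp
      also have "\<dots> \<le> exp (2 * C3 * M (2*n+1) * (t (2*n+2) - t (2*n+1))) * E (t (2*n+1))" by (rule odd(1))
      also have "\<dots> \<le> exp (2 * C3 * M (2*n+1) * (t (2*n+2) - t (2*n+1))) * (d n / (d n + 1) * E (t (2*n)))"
        by (intro mult_left_mono even(1)) simp
      also have "\<dots> = exp (x n) * E (t (2*n))"
        unfolding x_def exp_add using dh by simp
      finally show ?thesis .
    qed
    have P0: "(\<lambda>n. E (t (2*n))) \<longlonglongrightarrow> 0"
      by (rule prod_to_zero[where x = x]) (use Enn step sum_cond in \<open>auto simp: x_def\<close>)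
    have "(E \<longlongrightarrow> 0) at_top"
    proof (rule final_limit[OF t0 t_mono t_inf Enn P0])
      fix n \<tau> assume "t (2*n) \<le> \<tau>" "\<tau> \<le> t (2*n+1)"
      thus "E \<tau> \<le> E (t (2*n))" using even(2)[of \<tau> n] by simp
    next
      fix n \<tau> assume "t (2*n+1) \<le> \<tau>" "\<tau> \<le> t (2*n+2)"
      thus "E \<tau> \<le> E (t (2*(n+1)))" using odd(2)[of \<tau> n] by simp
    qed
    thus ?thesis unfolding E_def .
  qed
qed



end
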